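(* Let $s=(s_1,\ldots,s_n)$ be a sequence of positive integers and let $F$ be a nonempty face of the $s$-lecture hall simplex $P_n^s$. Then the local $h^\ast$-polynomial $\ell^\ast(F;z)$ is real-rooted, and hence unimodal.
   Context: $P_n^s=\{x\in\mathbb{R}^n:0\le x_1/s_1\le\cdots\le x_n/s_n\le1\}$. For a lattice $d$-simplex $\Delta=\mathrm{conv}(v^{(0)},\ldots,v^{(d)})\subset\mathbb{R}^n$, $\ell^\ast(\Delta;z)=\sum_{x\in\Pi^\circ_\Delta\cap\mathbb{Z}^{n+1}}z^{x_{n+1}}$, with $\Pi^\circ_\Delta=\{\sum_i\lambda_i(v^{(i)},1):0<\lambda_i<1\}$. A polynomial is real-rooted if all its zeros are real or it is identically zero. *)

theory Defs
  imports "HOL-Analysis.Analysis" "HOL-Computational_Algebra.Polynomial"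
begin

text \<open>The s-lecture hall simplex in R^n. Coordinates are indexed by a finite
  well-ordered type 'n (so n = CARD('n)); the order on 'n gives the order
  x_1, ..., x_n of the coordinates.\<close>
definition lecture_hall_simplex :: "('n::{finite,wellorder} \<Rightarrow> nat) \<Rightarrow> (real^'n::{finite,wellorder}) set" where
  "lecture_hall_simplex s =
     {x. (\<forall>i. 0 \<le> x$i / real (s i) \<and> x$i / real (s i) \<le> 1) \<and>
         (\<forall>i j. i \<le> j \<longrightarrow> x$i / real (s i) \<le> x$j / real (s j))}"

definition vertices_of :: "(real^'n) set \<Rightarrow> (real^'n) set" where
  "vertices_of P = {v. v extreme_point_of P}"

text \<open>Open fundamental parallelepiped of the cone over the simplex with vertex set V,
  in R^n x R (last coordinate = height).\<close>
definition open_parallelepiped :: "(real^'n) set \<Rightarrow> ((real^'n) \<times> real) set" where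
  "open_parallelepiped V =
     {(\<Sum>v\<in>V. l v *\<^sub>R v, \<Sum>v\<in>V. l v) | l. \<forall>v\<in>V. 0 < l v \<and> l v < 1}"

definition lattice_points_open_par :: "(real^'n) set \<Rightarrow> ((real^'n) \<times> real) set" where
  "lattice_points_open_par V =
     {p \<in> open_parallelepiped V. (\<forall>i. fst p $ i \<in> \<int>) \<and> snd p \<in> \<int>}"

definition local_hstar :: "(real^'n) set \<Rightarrow> real poly" where
  "local_hstar \<Delta> =
     (\<Sum>p\<in>lattice_points_open_par (vertices_of \<Delta>). monom 1 (nat \<lfloor>snd p\<rfloor>))"

definition real_rooted :: "real poly \<Rightarrow> bool" where
  "real_rooted p \<longleftrightarrow> p = 0 \<or> (\<forall>z::complex. poly (map_poly complex_of_real p) z = 0 \<longrightarrow> z \<in> \<real>)"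

definition unimodal_poly :: "real poly \<Rightarrow> bool" where
  "unimodal_poly p \<longleftrightarrow> (\<exists>k. (\<forall>i j. i \<le> j \<and> j \<le> k \<longrightarrow> coeff p i \<le> coeff p j) \<and>
                             (\<forall>i j. k \<le> i \<and> i \<le> j \<longrightarrow> coeff p j \<le> coeff p i))"

end

theory Submission
  imports Defs "HOL-Complex_Analysis.Complex_Analysis" "HOL-Computational_Algebra.Fundamental_Theorem_Algebra"
begin

definition HH :: "complex \<Rightarrow> complex \<Rightarrow> real" where
  "HH u v = Im (u * cnj v)"

lemma HH_add_left: "HH (u1 + u2) v = HH u1 v + HH u2 v"
  by (simp add: HH_def ring_distribs)
lemma HH_add_right: "HH u (v1 + v2) = HH u v1 + HH u v2"
  by (simp add: HH_def ring_distribs)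
lemma HH_zz: "HH (z * u) (z * v) = (cmod z)^2 * HH u v"
  unfolding cmod_power2 by (simp add: HH_def algebra_simps power2_eq_square)
lemma HH_anti: "HH v u = - HH u v"
proof -
  have "v * cnj u = cnj (u * cnj v)" by simp
  then show ?thesis by (simp add: HH_def)
qed
lemma HH_self: "HH u u = 0"
  using HH_anti[of u u] by simp
lemma HH_zself: "Im z \<ge> 0 \<Longrightarrow> HH (z * u) u \<ge> 0"
proof -
  assume a: "Im z \<ge> 0"
  have "HH (z * u) u = Im z * ((Re u)^2 + (Im u)^2)"
    by (simp add: HH_def algebra_simps power2_eq_square)
  then show ?thesis using a by simp
qed
lemma HH_0_left[simp]: "HH 0 v = 0" and HH_0_right[simp]: "HH u 0 = 0"
  by (simp_all add: HH_def)

lemma HH_sum_left: "HH (\<Sum>x\<in>A. f x) v = (\<Sum>x\<in>A. HH (f x) v)"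
  by (induction A rule: infinite_finite_induct) (simp_all add: HH_add_left)
lemma HH_sum_right: "HH u (\<Sum>x\<in>A. f x) = (\<Sum>x\<in>A. HH u (f x))"
  by (induction A rule: infinite_finite_induct) (simp_all add: HH_add_right)

lemma block1:
  assumes "\<And>x x'. x \<in> U \<Longrightarrow> x' \<in> V \<Longrightarrow> HH (a x') (a x) \<ge> 0"
  shows "HH (\<Sum>x\<in>V. a x) (\<Sum>x\<in>U. a x) \<ge> 0"
  unfolding HH_sum_left HH_sum_right using assms by (auto intro!: sum_nonneg)

lemma block2:
  assumes "\<And>x x'. x \<in> U \<Longrightarrow> x' \<in> V \<Longrightarrow> HH (z * a x) (a x') \<ge> 0"
  shows "HH (z * (\<Sum>x\<in>U. a x)) (\<Sum>x\<in>V. a x) \<ge> 0"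
  unfolding sum_distrib_left HH_sum_left HH_sum_right using assms by (auto intro!: sum_nonneg)

lemma HH_expand1:
  "HH (h + z * (l + f + m)) (f' + m + h + z * l) =
    HH h f' + HH h m + HH (z * f) h + HH (z * m) h
    + HH (z * l) f' + HH (z * l) m + HH (z * f) f' + HH (z * f) m + HH (z * m) f' + HH (z * m) m
    + (cmod z)^2 * (HH f l + HH m l)"
  unfolding cmod_power2 by (simp add: HH_def algebra_simps power2_eq_square)

lemma HH_expand2:
  "HH (z * (f' + m + h + z * l)) (h + z * (l + f + m)) =
    HH (z * (h + z * l)) (h + z * l)
    + (cmod z)^2 * (HH h f + HH h m + HH (z * l) f + HH (z * l) m)
    + HH (z * f') h + HH (z * m) h
    + (cmod z)^2 * (HH f' l + HH m l)
    + (cmod z)^2 * (HH f' f + HH f' m + HH m f)"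
  unfolding cmod_power2 by (simp add: HH_def algebra_simps power2_eq_square)

lemma trans_pair:
  fixes X :: "real set" and a :: "real \<Rightarrow> complex" and z :: complex
  assumes fin: "finite X" and z: "Im z > 0"
   and P1: "\<And>x x'. x\<in>X \<Longrightarrow> x'\<in>X \<Longrightarrow> x < x' \<Longrightarrow> HH (a x') (a x) \<ge> 0"
   and P2: "\<And>x x'. x\<in>X \<Longrightarrow> x'\<in>X \<Longrightarrow> x < x' \<Longrightarrow> HH (z * a x) (a x') \<ge> 0"
   and ff: "f < f'"
   and b: "\<And>y. b y = (\<Sum>g\<in>{g\<in>X. y<g}. a g) + z * (\<Sum>g\<in>{g\<in>X. g<y}. a g)"
  shows "HH (b f') (b f) \<ge> 0 \<and> HH (z * b f) (b f') \<ge> 0"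
proof -
  define Lo where "Lo = {g\<in>X. g<f}"
  define Fs where "Fs = {g\<in>X. g=f}"
  define Mi where "Mi = {g\<in>X. f<g \<and> g<f'}"
  define Fs' where "Fs' = {g\<in>X. g=f'}"
  define Hi where "Hi = {g\<in>X. f'<g}"
  have fins: "finite Lo" "finite Fs" "finite Mi" "finite Fs'" "finite Hi"
    using fin by (simp_all add: Lo_def Fs_def Mi_def Fs'_def Hi_def)
  have e1: "{g\<in>X. f<g} = (Fs' \<union> Mi) \<union> Hi" using ff by (auto simp: Fs'_def Mi_def Hi_def)
  have e2: "{g\<in>X. g<f'} = (Lo \<union> Fs) \<union> Mi" using ff by (auto simp: Lo_def Fs_def Mi_def)
  have e3: "{g\<in>X. f'<g} = Hi" by (simp add: Hi_def)
  have e4: "{g\<in>X. g<f} = Lo" by (simp add: Lo_def)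
  have d1: "(Fs' \<union> Mi) \<inter> Hi = {}" "Fs' \<inter> Mi = {}" "(Lo \<union> Fs) \<inter> Mi = {}" "Lo \<inter> Fs = {}"
    by (auto simp: Lo_def Fs_def Mi_def Fs'_def Hi_def)
  define SL where "SL = (\<Sum>g\<in>Lo. a g)"
  define SF where "SF = (\<Sum>g\<in>Fs. a g)"
  define SM where "SM = (\<Sum>g\<in>Mi. a g)"
  define SF' where "SF' = (\<Sum>g\<in>Fs'. a g)"
  define SH where "SH = (\<Sum>g\<in>Hi. a g)"
  have bf: "b f = SF' + SM + SH + z * SL"
    unfolding b e1 e4 SL_def SF'_def SM_def SH_def
    using fins d1 by (simp add: sum.union_disjoint)
  have bf': "b f' = SH + z * (SL + SF + SM)"
    unfolding b e2 e3 SL_def SF_def SM_def SH_def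
    using fins d1 by (simp add: sum.union_disjoint)
  have B1: "HH (\<Sum>g\<in>V. a g) (\<Sum>g\<in>U. a g) \<ge> 0"
    if "U \<subseteq> X" "V \<subseteq> X" "\<And>x x'. x\<in>U \<Longrightarrow> x'\<in>V \<Longrightarrow> x<x'" for U V
    by (rule block1) (use that P1 in blast)
  have B2: "HH (z * (\<Sum>g\<in>U. a g)) (\<Sum>g\<in>V. a g) \<ge> 0"
    if "U \<subseteq> X" "V \<subseteq> X" "\<And>x x'. x\<in>U \<Longrightarrow> x'\<in>V \<Longrightarrow> x<x'" for U V
    by (rule block2) (use that P2 in blast)
  have sub: "Lo \<subseteq> X" "Fs \<subseteq> X" "Mi \<subseteq> X" "Fs' \<subseteq> X" "Hi \<subseteq> X"
    by (auto simp: Lo_def Fs_def Mi_def Fs'_def Hi_def)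
  have self: "HH (z * u) u \<ge> 0" for u using z HH_zself by simp
  have o1: "HH SH SF' \<ge> 0" unfolding SH_def SF'_def by (rule B1) (use ff sub in \<open>auto simp: Fs'_def Hi_def\<close>)
  have o2: "HH SH SM \<ge> 0" unfolding SH_def SM_def by (rule B1) (use ff sub in \<open>auto simp: Mi_def Hi_def\<close>)
  have o3: "HH (z * SF) SH \<ge> 0" unfolding SH_def SF_def by (rule B2) (use ff sub in \<open>auto simp: Fs_def Hi_def\<close>)
  have o4: "HH (z * SM) SH \<ge> 0" unfolding SH_def SM_def by (rule B2) (use ff sub in \<open>auto simp: Mi_def Hi_def\<close>)
  have o5: "HH (z * SL) SF' \<ge> 0" unfolding SL_def SF'_def by (rule B2) (use ff sub in \<open>auto simp: Lo_def Fs'_def\<close>)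
  have o6: "HH (z * SL) SM \<ge> 0" unfolding SL_def SM_def by (rule B2) (use ff sub in \<open>auto simp: Lo_def Mi_def\<close>)
  have o7: "HH (z * SF) SF' \<ge> 0" unfolding SF_def SF'_def by (rule B2) (use ff sub in \<open>auto simp: Fs_def Fs'_def\<close>)
  have o8: "HH (z * SF) SM \<ge> 0" unfolding SF_def SM_def by (rule B2) (use ff sub in \<open>auto simp: Fs_def Mi_def\<close>)
  have o9: "HH (z * SM) SF' \<ge> 0" unfolding SM_def SF'_def by (rule B2) (use ff sub in \<open>auto simp: Mi_def Fs'_def\<close>)
  have o10: "HH SF SL \<ge> 0" unfolding SF_def SL_def by (rule B1) (use ff sub in \<open>auto simp: Fs_def Lo_def\<close>)
  have o11: "HH SM SL \<ge> 0" unfolding SM_def SL_def by (rule B1) (use ff sub in \<open>auto simp: Mi_def Lo_def\<close>)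
  have o12: "HH SH SF \<ge> 0" unfolding SH_def SF_def by (rule B1) (use ff sub in \<open>auto simp: Fs_def Hi_def\<close>)
  have o13: "HH (z * SL) SF \<ge> 0" unfolding SL_def SF_def by (rule B2) (use ff sub in \<open>auto simp: Lo_def Fs_def\<close>)
  have o14: "HH SF' SL \<ge> 0" unfolding SF'_def SL_def by (rule B1) (use ff sub in \<open>auto simp: Fs'_def Lo_def\<close>)
  have o15: "HH SF' SF \<ge> 0" unfolding SF'_def SF_def by (rule B1) (use ff sub in \<open>auto simp: Fs'_def Fs_def\<close>)
  have o16: "HH SF' SM \<ge> 0" unfolding SF'_def SM_def by (rule B1) (use ff sub in \<open>auto simp: Fs'_def Mi_def\<close>)
  have o17: "HH SM SF \<ge> 0" unfolding SM_def SF_def by (rule B1) (use ff sub in \<open>auto simp: Mi_def Fs_def\<close>)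
  have o18: "HH (z * SF') SH \<ge> 0" unfolding SF'_def SH_def by (rule B2) (use ff sub in \<open>auto simp: Fs'_def Hi_def\<close>)
  have g1: "HH (b f') (b f) \<ge> 0"
    unfolding bf bf' HH_expand1
    using o1 o2 o3 o4 o5 o6 o7 o8 o9 o10 o11 self[of SM]
    by (simp add: add_nonneg_nonneg)
  have g2: "HH (z * b f) (b f') \<ge> 0"
    unfolding bf bf' HH_expand2
    using o12 o2 o13 o6 o18 o4 o14 o11 o15 o16 o17 self[of "SH + z * SL"]
    by (simp add: add_nonneg_nonneg)
  show ?thesis using g1 g2 by simp
qed

definition ev :: "real poly \<Rightarrow> complex \<Rightarrow> complex" where
  "ev p z = poly (map_poly complex_of_real p) z"

lemma ev_cnj: "ev p (cnj z) = cnj (ev p z)"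
  unfolding ev_def by (rule poly_cnj_real[symmetric]) (simp add: coeff_map_poly)

lemma map_of_real_add: "map_poly complex_of_real (p + q) = map_poly complex_of_real p + map_poly complex_of_real q"
  by (rule poly_eqI) (simp add: coeff_map_poly)
lemma ev_add[simp]: "ev (p + q) z = ev p z + ev q z"
  by (simp add: ev_def map_of_real_add)
lemma ev_sum: "ev (\<Sum>x\<in>A. f x) z = (\<Sum>x\<in>A. ev (f x) z)"
  by (induction A rule: infinite_finite_induct) (simp_all add: ev_def map_of_real_add)
lemma ev_0[simp]: "ev 0 z = 0" by (simp add: ev_def)
lemma ev_X[simp]: "ev ([:0,1:] * p) z = z * ev p z"
proof -
  have "[:0,1:] * p = pCons 0 p" by simp
  then show ?thesis by (simp add: ev_def map_poly_pCons)
qed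
lemma ev_monom: "ev (monom 1 n) z = z ^ n"
  by (simp add: ev_def poly_monom map_poly_monom)

lemma map_of_real_eq0: "map_poly complex_of_real p = 0 \<longleftrightarrow> p = 0"
  by (rule map_poly_eq_0_iff) auto

lemma key:
  fixes f g :: "real poly"
  assumes f0: "f \<noteq> 0" and rf: "real_rooted f"
   and H: "\<And>z. Im z > 0 \<Longrightarrow> HH (ev g z) (ev f z) \<ge> 0"
  shows "real_rooted g"
proof (cases "g = 0")
  case True then show ?thesis by (simp add: real_rooted_def)
next
  case False
  define S where "S = {z::complex. Im z > 0}"
  have fnz: "ev f z \<noteq> 0" if "z \<in> S" for z
  proof
    assume "ev f z = 0"
    then have "z \<in> \<real>" using rf f0 unfolding real_rooted_def ev_def by blast
    then show False using that by (auto simp: S_def complex_is_Real_iff)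
  qed
  have "\<forall>w. ev g w = 0 \<longrightarrow> w \<in> \<real>"
  proof (intro allI impI, rule ccontr)
    fix w assume gw: "ev g w = 0" and wn: "w \<notin> \<real>"
    obtain w' where w'S: "w' \<in> S" and gw': "ev g w' = 0"
    proof (cases "Im w > 0")
      case True then show ?thesis using that gw by (auto simp: S_def)
    next
      case False
      then have "Im w < 0" using wn by (metis complex_is_Real_iff linorder_neqE_linordered_idom)
      then show ?thesis using that[of "cnj w"] gw by (auto simp: S_def ev_cnj)
    qed
    define \<phi> where "\<phi> = (\<lambda>z. ev g z / ev f z)"
    have hol: "\<phi> holomorphic_on S"
      unfolding \<phi>_def ev_def using fnz unfolding ev_def
      by (intro holomorphic_intros) auto
    have Imphi: "Im (\<phi> z) \<ge> 0" if "z \<in> S" for z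
    proof -
      have "Im (\<phi> z) = HH (ev g z) (ev f z) / (cmod (ev f z))^2"
        unfolding \<phi>_def HH_def Im_divide' by (simp add: algebra_simps)
      then show ?thesis using H[of z] that by (simp add: S_def)
    qed
    have openS: "open S" and connS: "connected S"
      by (simp_all add: S_def open_halfspace_Im_gt connected_halfspace_Im_gt)
    show False
    proof (cases "\<phi> constant_on S")
      case True
      then obtain c where c: "\<And>z. z \<in> S \<Longrightarrow> \<phi> z = c" by (auto simp: constant_on_def)
      have "c = 0" using c[OF w'S] gw' by (simp add: \<phi>_def)
      then have "S \<subseteq> {z. poly (map_poly complex_of_real g) z = 0}"
        using c fnz by (auto simp: \<phi>_def ev_def)
      moreover have "finite {z. poly (map_poly complex_of_real g) z = 0}"
        by (rule poly_roots_finite) (simp add: map_of_real_eq0 False)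
      ultimately have "finite S" by (rule finite_subset)
      then show False using uncountable_halfspace_Im_gt[of 0] countable_finite by (auto simp: S_def)
    next
      case False
      have "open (\<phi> ` S)" by (rule open_mapping_thm[OF hol openS connS openS order.refl False])
      moreover have "0 \<in> \<phi> ` S" using w'S gw' by (auto simp: \<phi>_def)
      ultimately obtain e where e: "e > 0" "ball 0 e \<subseteq> \<phi> ` S" by (meson openE)
      have "- (\<i> * of_real (e/2)) \<in> ball 0 e" using e by (simp add: norm_mult)
      then have "- (\<i> * of_real (e/2)) \<in> \<phi> ` S" using e(2) by (rule subsetD[rotated])
      then obtain z where "z \<in> S" "\<phi> z = - (\<i> * of_real (e/2))" by (auto simp del: of_real_divide)
      then show False using Imphi[of z] e by simp
    qed
  qed
  then show ?thesis unfolding real_rooted_def ev_def by blast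
qed

lemma ev_pCons0[simp]: "ev (pCons 0 p) z = z * ev p z"
  using ev_X[of p z] by simp

lemma rr_0[simp]: "real_rooted 0" by (simp add: real_rooted_def)

lemma rr_monom: "real_rooted (monom 1 n)"
  unfolding real_rooted_def by (auto simp: map_poly_monom poly_monom)

lemma rr_trans:
  fixes X :: "real set" and P :: "real \<Rightarrow> real poly"
  assumes fin: "finite X" and rr: "\<And>g. g \<in> X \<Longrightarrow> real_rooted (P g)"
   and P1: "\<And>z g g'. Im z > 0 \<Longrightarrow> g\<in>X \<Longrightarrow> g'\<in>X \<Longrightarrow> g < g' \<Longrightarrow> HH (ev (P g') z) (ev (P g) z) \<ge> 0"
   and P2: "\<And>z g g'. Im z > 0 \<Longrightarrow> g\<in>X \<Longrightarrow> g'\<in>X \<Longrightarrow> g < g' \<Longrightarrow> HH (z * ev (P g) z) (ev (P g') z) \<ge> 0"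
  shows "real_rooted ((\<Sum>g\<in>{g\<in>X. x<g}. P g) + [:0,1:] * (\<Sum>g\<in>{g\<in>X. g<x}. P g))"
    (is "real_rooted ?Q")
proof -
  have evQ: "ev ?Q z = (\<Sum>g\<in>{g\<in>X. x<g}. ev (P g) z) + z * (\<Sum>g\<in>{g\<in>X. g<x}. ev (P g) z)" for z
    by (simp add: ev_sum)
  have HQ: "HH (ev ?Q z) u = (\<Sum>g\<in>{g\<in>X. x<g}. HH (ev (P g) z) u) + (\<Sum>g\<in>{g\<in>X. g<x}. HH (z * ev (P g) z) u)" for z u
  proof -
    have "HH (ev ?Q z) u = HH (\<Sum>g\<in>{g\<in>X. x<g}. ev (P g) z) u + HH (z * (\<Sum>g\<in>{g\<in>X. g<x}. ev (P g) z)) u"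
      by (simp only: evQ HH_add_left)
    also have "\<dots> = (\<Sum>g\<in>{g\<in>X. x<g}. HH (ev (P g) z) u) + (\<Sum>g\<in>{g\<in>X. g<x}. HH (z * ev (P g) z) u)"
      by (simp only: sum_distrib_left HH_sum_left)
    finally show ?thesis .
  qed
  show ?thesis
  proof (cases "\<exists>g\<in>X. x<g \<and> P g \<noteq> 0")
    case True
    define A where "A = {g\<in>X. x<g \<and> P g \<noteq> 0}"
    have finA: "finite A" and neA: "A \<noteq> {}" using fin True by (auto simp: A_def)
    define gs where "gs = Min A"
    have gsA: "gs \<in> A" using finA neA by (simp add: gs_def)
    have gsmin: "\<And>g. g \<in> A \<Longrightarrow> gs \<le> g" using finA by (simp add: gs_def)
    have gsX: "gs \<in> X" "x < gs" "P gs \<noteq> 0" using gsA by (auto simp: A_def)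
    show ?thesis
    proof (rule key[of "P gs"])
      show "P gs \<noteq> 0" "real_rooted (P gs)" using gsX rr by auto
      fix z :: complex assume z: "Im z > 0"
      have t1: "HH (ev (P g) z) (ev (P gs) z) \<ge> 0" if "g \<in> {g\<in>X. x<g}" for g
      proof -
        consider "g < gs" | "g = gs" | "gs < g" by linarith
        then show ?thesis
        proof cases
          case 1
          then have "P g = 0" using that gsmin[of g] by (force simp: A_def)
          then show ?thesis by simp
        next
          case 2 then show ?thesis by (simp add: HH_self)
        next
          case 3 then show ?thesis using P1[OF z] that gsX by auto
        qed
      qed
      have t2: "HH (z * ev (P g) z) (ev (P gs) z) \<ge> 0" if "g \<in> {g\<in>X. g<x}" for g
        using P2[OF z, of g gs] that gsX by auto
      show "HH (ev ?Q z) (ev (P gs) z) \<ge> 0"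
        unfolding HQ using t1 t2 by (intro add_nonneg_nonneg sum_nonneg) auto
    qed
  next
    case False
    note F1 = False
    show ?thesis
    proof (cases "\<exists>g\<in>X. g<x \<and> P g \<noteq> 0")
      case True
      define A where "A = {g\<in>X. g<x \<and> P g \<noteq> 0}"
      have finA: "finite A" and neA: "A \<noteq> {}" using fin True by (auto simp: A_def)
      define gs where "gs = Max A"
      have gsA: "gs \<in> A" using finA neA by (simp add: gs_def)
      have gsmax: "\<And>g. g \<in> A \<Longrightarrow> g \<le> gs" using finA by (simp add: gs_def)
      have gsX: "gs \<in> X" "gs < x" "P gs \<noteq> 0" using gsA by (auto simp: A_def)
      show ?thesis
      proof (rule key[of "P gs"])
        show "P gs \<noteq> 0" "real_rooted (P gs)" using gsX rr by auto
        fix z :: complex assume z: "Im z > 0"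
        have t1: "HH (ev (P g) z) (ev (P gs) z) = 0" if "g \<in> {g\<in>X. x<g}" for g
          using F1 that by auto
        have t2: "HH (z * ev (P g) z) (ev (P gs) z) \<ge> 0" if "g \<in> {g\<in>X. g<x}" for g
        proof -
          consider "g < gs" | "g = gs" | "gs < g" by linarith
          then show ?thesis
          proof cases
            case 1 then show ?thesis using P2[OF z, of g gs] that gsX by auto
          next
            case 2 then show ?thesis using HH_zself z by simp
          next
            case 3
            then have "P g = 0" using that gsmax[of g] by (force simp: A_def)
            then show ?thesis by simp
          qed
        qed
        show "HH (ev ?Q z) (ev (P gs) z) \<ge> 0"
          unfolding HQ using t1 t2 by (intro add_nonneg_nonneg sum_nonneg) auto
      qed
    next
      case False
      then have "?Q = 0" using F1 by (auto intro!: sum.neutral)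
      then show ?thesis by simp
    qed
  qed
qed

definition stepc :: "nat \<Rightarrow> bool \<Rightarrow> real \<Rightarrow> real \<Rightarrow> bool" where
  "stepc s b w0 w1 \<longleftrightarrow> (if b then w0 < w1 \<and> w1 < w0 + 1 else w1 = w0) \<and> real s * w1 \<in> \<int>"

definition Nxt :: "nat \<Rightarrow> bool \<Rightarrow> real \<Rightarrow> real set" where
  "Nxt s b w0 = {w1. stepc s b w0 w1}"

definition EE :: "bool \<Rightarrow> real \<Rightarrow> real poly" where
  "EE og w = (if og then (if w \<in> \<int> then 0 else monom 1 (nat \<lfloor>w\<rfloor> + 1))
              else (if w \<in> \<int> then monom 1 (nat \<lfloor>w\<rfloor>) else 0))"

fun Phi :: "bool \<Rightarrow> (nat \<times> bool) list \<Rightarrow> real \<Rightarrow> real poly" where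
  "Phi og [] w0 = EE og w0"
| "Phi og ((s,b)#ds) w0 = (\<Sum>w1\<in>Nxt s b w0. Phi og ds w1)"

lemma Nxt_finite:
  assumes "s > 0" shows "finite (Nxt s b w0)"
proof -
  have "Nxt s b w0 \<subseteq> (\<lambda>k. real_of_int k / real s) ` {\<lfloor>real s * w0\<rfloor>..\<lceil>real s * (w0 + 1)\<rceil>}"
  proof
    fix w1 assume "w1 \<in> Nxt s b w0"
    then have st: "stepc s b w0 w1" by (simp add: Nxt_def)
    then obtain k where k: "real s * w1 = of_int k" by (auto simp: stepc_def elim!: Ints_cases)
    have le: "w0 \<le> w1 \<and> w1 \<le> w0 + 1" using st by (auto simp: stepc_def split: if_splits)
    have "real s * w0 \<le> real s * w1" "real s * w1 \<le> real s * (w0 + 1)"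
      using le assms by (auto intro: mult_left_mono)
    then have "k \<in> {\<lfloor>real s * w0\<rfloor>..\<lceil>real s * (w0 + 1)\<rceil>}" using k
      by (simp add: floor_le_iff le_ceiling_iff)
    moreover have "w1 = real_of_int k / real s" using k assms by (simp add: field_simps)
    ultimately show "w1 \<in> (\<lambda>k. real_of_int k / real s) ` {\<lfloor>real s * w0\<rfloor>..\<lceil>real s * (w0 + 1)\<rceil>}" by blast
  qed
  then show ?thesis by (rule finite_subset) simp
qed

lemma Ints_shift1: "real s * (w + 1) \<in> \<int> \<longleftrightarrow> real s * w \<in> \<int>"
proof -
  have "real s * (w + 1) = real s * w + of_nat s" by (simp add: algebra_simps)
  then show ?thesis by (metis Ints_add Ints_diff Ints_of_nat add_diff_cancel_right')
qed

lemma Nxt_shift: "Nxt s b (w + 1) = (\<lambda>x. x + 1) ` Nxt s b w"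
proof (rule set_eqI)
  fix y
  show "y \<in> Nxt s b (w + 1) \<longleftrightarrow> y \<in> (\<lambda>x. x + 1) ` Nxt s b w"
  proof
    assume "y \<in> Nxt s b (w + 1)"
    then have "y - 1 \<in> Nxt s b w"
      using Ints_shift1[of s "y - 1"] by (auto simp: Nxt_def stepc_def split: if_splits)
    then show "y \<in> (\<lambda>x. x + 1) ` Nxt s b w" by (rule rev_image_eqI) simp
  next
    assume "y \<in> (\<lambda>x. x + 1) ` Nxt s b w"
    then obtain x where "x \<in> Nxt s b w" "y = x + 1" by blast
    then show "y \<in> Nxt s b (w + 1)"
      using Ints_shift1[of s x] by (auto simp: Nxt_def stepc_def split: if_splits)
  qed
qed

lemma Nxt_ge: "w1 \<in> Nxt s b w0 \<Longrightarrow> w0 \<le> w1"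
  by (auto simp: Nxt_def stepc_def split: if_splits)

lemma monom_Suc_X: "[:0,1:] * monom (1::real) n = monom 1 (Suc n)"
  by (simp add: monom_Suc)

lemma Ints_plus1_iff: "(w::real) + 1 \<in> \<int> \<longleftrightarrow> w \<in> \<int>"
  by (metis Ints_1 Ints_add Ints_diff add_diff_cancel_right')

lemma EE_shift: "w \<ge> 0 \<Longrightarrow> EE og (w + 1) = [:0,1:] * EE og w"
proof -
  assume w: "w \<ge> 0"
  have fl: "nat \<lfloor>w + 1\<rfloor> = Suc (nat \<lfloor>w\<rfloor>)" using w by (simp add: nat_add_distrib)
  show ?thesis unfolding EE_def Ints_plus1_iff fl by (simp add: monom_Suc)
qed

definition okds :: "(nat \<times> bool) list \<Rightarrow> bool" where
  "okds ds \<longleftrightarrow> (\<forall>p\<in>set ds. fst p > 0)"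

lemma Phi_shift: "w \<ge> 0 \<Longrightarrow> Phi og ds (w + 1) = [:0,1:] * Phi og ds w"
proof (induction ds arbitrary: w)
  case Nil then show ?case by (simp add: EE_shift)
next
  case (Cons p ds)
  obtain s b where p: "p = (s,b)" by (cases p)
  have "Phi og (p#ds) (w+1) = (\<Sum>w1\<in>(\<lambda>x. x + 1) ` Nxt s b w. Phi og ds w1)"
    by (simp add: p Nxt_shift)
  also have "\<dots> = (\<Sum>w1\<in>Nxt s b w. Phi og ds (w1 + 1))"
    by (subst sum.reindex) (auto simp: inj_on_def)
  also have "\<dots> = (\<Sum>w1\<in>Nxt s b w. [:0,1:] * Phi og ds w1)"
    using Cons.IH Cons.prems Nxt_ge by (intro sum.cong) (auto, fastforce)
  also have "\<dots> = [:0,1:] * Phi og (p#ds) w"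
    by (simp add: p sum_distrib_left)
  finally show ?case .
qed

definition GG :: "nat \<Rightarrow> real set" where
  "GG s = {g. 0 \<le> g \<and> g < 1 \<and> real s * g \<in> \<int>}"

lemma GG_finite: "s > 0 \<Longrightarrow> finite (GG s)"
proof -
  assume s: "s > 0"
  have "GG s \<subseteq> insert 0 (Nxt s True 0)"
    by (auto simp: GG_def Nxt_def stepc_def)
  then show ?thesis using Nxt_finite[OF s] finite_subset by blast
qed

lemma Nxt_True_split:
  assumes "0 \<le> x" "x < 1"
  shows "Nxt s True x = {g\<in>GG s. x<g} \<union> (\<lambda>g. g + 1) ` {g\<in>GG s. g<x}"
proof (rule set_eqI)
  fix y
  show "y \<in> Nxt s True x \<longleftrightarrow> y \<in> {g\<in>GG s. x<g} \<union> (\<lambda>g. g + 1) ` {g\<in>GG s. g<x}"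
  proof
    assume y: "y \<in> Nxt s True x"
    show "y \<in> {g\<in>GG s. x<g} \<union> (\<lambda>g. g + 1) ` {g\<in>GG s. g<x}"
    proof (cases "y < 1")
      case True then show ?thesis using y assms by (auto simp: Nxt_def stepc_def GG_def)
    next
      case False
      then have "y - 1 \<in> {g\<in>GG s. g<x}" using y assms Ints_shift1[of s "y - 1"]
        by (auto simp: Nxt_def stepc_def GG_def)
      then show ?thesis by (intro UnI2) (rule rev_image_eqI, auto)
    qed
  next
    assume "y \<in> {g\<in>GG s. x<g} \<union> (\<lambda>g. g + 1) ` {g\<in>GG s. g<x}"
    then show "y \<in> Nxt s True x"
    proof
      assume "y \<in> {g\<in>GG s. x<g}" then show ?thesis using assms by (auto simp: Nxt_def stepc_def GG_def)
    next
      assume "y \<in> (\<lambda>g. g + 1) ` {g\<in>GG s. g<x}"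
      then obtain g where "g \<in> GG s" "g < x" "y = g + 1" by blast
      then show ?thesis using Ints_shift1[of s g] assms by (auto simp: Nxt_def stepc_def GG_def)
    qed
  qed
qed

lemma Phi_True:
  assumes "0 \<le> x" "x < 1" "s > 0"
  shows "Phi og ((s,True)#ds) x = (\<Sum>g\<in>{g\<in>GG s. x<g}. Phi og ds g) + [:0,1:] * (\<Sum>g\<in>{g\<in>GG s. g<x}. Phi og ds g)"
proof -
  have fin: "finite (GG s)" using GG_finite assms by simp
  have disj: "{g\<in>GG s. x<g} \<inter> (\<lambda>g. g + 1) ` {g\<in>GG s. g<x} = {}"
    by (auto simp: GG_def)
  have "Phi og ((s,True)#ds) x = (\<Sum>g\<in>{g\<in>GG s. x<g}. Phi og ds g) + (\<Sum>w\<in>(\<lambda>g. g + 1) ` {g\<in>GG s. g<x}. Phi og ds w)"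
    using fin disj by (simp add: Nxt_True_split[OF assms(1,2)] sum.union_disjoint)
  also have "(\<Sum>w\<in>(\<lambda>g. g + 1) ` {g\<in>GG s. g<x}. Phi og ds w) = (\<Sum>g\<in>{g\<in>GG s. g<x}. Phi og ds (g + 1))"
    by (subst sum.reindex) (auto simp: inj_on_def)
  also have "\<dots> = (\<Sum>g\<in>{g\<in>GG s. g<x}. [:0,1:] * Phi og ds g)"
    by (intro sum.cong refl Phi_shift) (auto simp: GG_def)
  finally show ?thesis by (simp add: sum_distrib_left)
qed

lemma Phi_False: "Phi og ((s,False)#ds) x = (if real s * x \<in> \<int> then Phi og ds x else 0)"
proof -
  have "Nxt s False x = (if real s * x \<in> \<int> then {x} else {})"
    by (auto simp: Nxt_def stepc_def)
  then show ?thesis by simp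
qed

definition Inv :: "bool \<Rightarrow> (nat \<times> bool) list \<Rightarrow> bool" where
  "Inv og ds \<longleftrightarrow> (\<forall>x. 0 \<le> x \<longrightarrow> x < 1 \<longrightarrow> real_rooted (Phi og ds x)) \<and>
     (\<forall>x x' z. 0 \<le> x \<longrightarrow> x < x' \<longrightarrow> x' < 1 \<longrightarrow> Im z > 0 \<longrightarrow>
        HH (ev (Phi og ds x') z) (ev (Phi og ds x) z) \<ge> 0 \<and>
        HH (z * ev (Phi og ds x) z) (ev (Phi og ds x') z) \<ge> 0)"

lemma Inv_Nil: "Inv og []"
proof -
  have E: "Phi og [] x = (if og then (if x = 0 then 0 else monom 1 1) else (if x = 0 then 1 else 0))"
    if "0 \<le> x" "x < 1" for x
  proof -
    have "x \<in> \<int> \<longleftrightarrow> x = 0"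
    proof
      assume "x \<in> \<int>"
      then obtain k where k: "x = of_int k" by (auto elim: Ints_cases)
      then have "0 \<le> k" "k < 1" using that by auto
      then show "x = 0" using k by simp
    qed simp
    moreover have "x \<noteq> 0 \<Longrightarrow> nat \<lfloor>x\<rfloor> = 0" using that by simp
    ultimately show ?thesis by (auto simp: EE_def)
  qed
  have ev1: "ev (monom 1 1) z = z" for z by (simp add: ev_monom)
  have rr1: "real_rooted 1" using rr_monom[of 0] by simp
  show ?thesis unfolding Inv_def
  proof (rule conjI; intro allI impI)
    fix x :: real assume "0 \<le> x" "x < 1"
    then show "real_rooted (Phi og [] x)" using E rr_monom rr1 by auto
  next
    fix x x' :: real and z :: complex assume a: "0 \<le> x" "x < x'" "x' < 1" "Im z > 0"
    have x'0: "x' \<noteq> 0" using a by simp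
    show "HH (ev (Phi og [] x') z) (ev (Phi og [] x) z) \<ge> 0 \<and>
          HH (z * ev (Phi og [] x) z) (ev (Phi og [] x') z) \<ge> 0"
      using a x'0 E[of x] E[of x'] ev1 HH_zself[of z z] by (auto simp: HH_self)
  qed
qed

lemma Inv_False: "Inv og ds \<Longrightarrow> Inv og ((s,False)#ds)"
  unfolding Inv_def Phi_False by auto

lemma Inv_True:
  assumes s: "s > 0" and I: "Inv og ds"
  shows "Inv og ((s,True)#ds)"
proof -
  have fin: "finite (GG s)" using GG_finite s by simp
  have inG: "0 \<le> g \<and> g < 1" if "g \<in> GG s" for g using that by (auto simp: GG_def)
  have P1: "HH (ev (Phi og ds g') z) (ev (Phi og ds g) z) \<ge> 0"
    and P2: "HH (z * ev (Phi og ds g) z) (ev (Phi og ds g') z) \<ge> 0"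
    if "Im z > 0" "g \<in> GG s" "g' \<in> GG s" "g < g'" for z g g'
    using I that inG[of g] inG[of g'] unfolding Inv_def by blast+
  have rr: "real_rooted (Phi og ds g)" if "g \<in> GG s" for g
    using I that inG[of g] unfolding Inv_def by blast
  show ?thesis unfolding Inv_def
  proof (rule conjI; intro allI impI)
    fix x :: real assume x: "0 \<le> x" "x < 1"
    show "real_rooted (Phi og ((s,True)#ds) x)"
      unfolding Phi_True[OF x s] by (rule rr_trans[OF fin rr P1 P2])
  next
    fix x x' :: real and z :: complex assume a: "0 \<le> x" "x < x'" "x' < 1" "Im z > 0"
    define bb where "bb = (\<lambda>y. (\<Sum>g\<in>{g\<in>GG s. y<g}. ev (Phi og ds g) z) + z * (\<Sum>g\<in>{g\<in>GG s. g<y}. ev (Phi og ds g) z))"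
    have evP: "ev (Phi og ((s,True)#ds) y) z = bb y" if "0 \<le> y" "y < 1" for y
      unfolding Phi_True[OF that s] bb_def by (simp add: ev_sum)
    have "HH (bb x') (bb x) \<ge> 0 \<and> HH (z * bb x) (bb x') \<ge> 0"
    proof (rule trans_pair[OF fin a(4), where a = "\<lambda>g. ev (Phi og ds g) z"])
      show "\<And>x x'. x \<in> GG s \<Longrightarrow> x' \<in> GG s \<Longrightarrow> x < x' \<Longrightarrow> HH (ev (Phi og ds x') z) (ev (Phi og ds x) z) \<ge> 0"
        using P1 a(4) by blast
      show "\<And>x x'. x \<in> GG s \<Longrightarrow> x' \<in> GG s \<Longrightarrow> x < x' \<Longrightarrow> HH (z * ev (Phi og ds x) z) (ev (Phi og ds x') z) \<ge> 0"
        using P2 a(4) by blast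
      show "x < x'" by fact
    qed (simp add: bb_def)
    then show "HH (ev (Phi og ((s,True)#ds) x') z) (ev (Phi og ((s,True)#ds) x) z) \<ge> 0 \<and>
          HH (z * ev (Phi og ((s,True)#ds) x) z) (ev (Phi og ((s,True)#ds) x') z) \<ge> 0"
    proof -
      have e1: "ev (Phi og ((s,True)#ds) x) z = bb x" using a by (intro evP) auto
      have e2: "ev (Phi og ((s,True)#ds) x') z = bb x'" using a by (intro evP) auto
      show ?thesis unfolding e1 e2 by fact
    qed
  qed
qed

lemma Inv_all: "okds ds \<Longrightarrow> Inv og ds"
proof (induction ds)
  case Nil then show ?case by (simp add: Inv_Nil)
next
  case (Cons p ds)
  obtain s b where p: "p = (s,b)" by (cases p)
  have s: "s > 0" and ok: "okds ds" using Cons.prems by (auto simp: okds_def p)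
  show ?case
  proof (cases b)
    case True then show ?thesis using Inv_True[OF s Cons.IH[OF ok]] by (simp add: p)
  next
    case False then show ?thesis using Inv_False[OF Cons.IH[OF ok]] by (simp add: p)
  qed
qed

lemma Phi_rr: "okds ds \<Longrightarrow> real_rooted (Phi og ds 0)"
  using Inv_all[of ds og] unfolding Inv_def by simp

lemma ev_pCons: "ev (pCons a p) z = of_real a + z * ev p z"
  by (simp add: ev_def map_poly_pCons)
lemma ev_smult: "ev (smult a p) z = of_real a * ev p z"
  by (induction p) (simp_all add: ev_pCons algebra_simps)
lemma ev_mult: "ev (p * q) z = ev p z * ev q z"
  by (induction p) (simp_all add: ev_pCons ev_smult algebra_simps)
lemma ev_of_real: "ev p (of_real x) = of_real (poly p x)"
  by (induction p) (simp_all add: ev_pCons)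

lemma rr_factor:
  assumes "real_rooted p" "p \<noteq> 0"
  shows "\<exists>c rs. c \<noteq> 0 \<and> p = smult c (\<Prod>r\<leftarrow>rs. [:-r,1:])"
  using assms
proof (induction "degree p" arbitrary: p rule: less_induct)
  case less
  show ?case
  proof (cases "degree p = 0")
    case True
    then have "p = smult (coeff p 0) (\<Prod>r\<leftarrow>[]. [:-r,1:])" by (simp add: degree_0_id)
    moreover have "coeff p 0 \<noteq> 0" using True less.prems by (metis leading_coeff_0_iff)
    ultimately show ?thesis by blast
  next
    case False
    have "\<exists>w. poly (map_poly complex_of_real p) w = 0"
    proof (rule fundamental_theorem_of_algebra_alt)
      show "\<not> (\<exists>a l. a \<noteq> 0 \<and> l = 0 \<and> map_poly complex_of_real p = pCons a l)"
      proof
        assume "\<exists>a l. a \<noteq> 0 \<and> l = 0 \<and> map_poly complex_of_real p = pCons a l"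
        then have "degree (map_poly complex_of_real p) = 0" by auto
        then show False using False by (simp add: degree_map_poly)
      qed
    qed
    then obtain w where w: "ev p w = 0" by (auto simp: ev_def)
    then have "w \<in> \<real>" using less.prems unfolding real_rooted_def ev_def by blast
    then obtain r where r: "w = of_real r" by (auto elim: Reals_cases)
    have "poly p r = 0" using w r ev_of_real[of p r] by simp
    then have "[:-r,1:] dvd p" by (simp add: poly_eq_0_iff_dvd)
    then obtain q where q: "p = [:-r,1:] * q" by (rule dvdE)
    have q0: "q \<noteq> 0" using q less.prems by auto
    have "degree p = degree [:-r,1:] + degree q" unfolding q by (rule degree_mult_eq) (use q0 in auto)
    then have dq: "degree q < degree p" by simp
    have rq: "real_rooted q" unfolding real_rooted_def
    proof (intro disjI2 allI impI)
      fix u assume "poly (map_poly complex_of_real q) u = 0"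
      then have "ev q u = 0" by (simp add: ev_def)
      moreover have "ev p u = ev [:-r,1:] u * ev q u" by (simp only: q ev_mult)
      ultimately have "ev p u = 0" by simp
      then show "u \<in> \<real>" using less.prems unfolding real_rooted_def ev_def by blast
    qed
    obtain c rs where "c \<noteq> 0" "q = smult c (\<Prod>r\<leftarrow>rs. [:-r,1:])"
      using less.hyps[OF dq rq q0] by blast
    then have "p = smult c (\<Prod>r\<leftarrow>r#rs. [:-r,1:])" by (simp add: q mult.left_commute)
    then show ?thesis using \<open>c \<noteq> 0\<close> by blast
  qed
qed

lemma poly_pos:
  fixes p :: "real poly"
  assumes "p \<noteq> 0" "\<And>i. coeff p i \<ge> 0" "t > 0"
  shows "poly p t > 0"
  using assms
proof (induction p)
  case 0 then show ?case by simp
next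
  case (pCons a p)
  have a: "a \<ge> 0" using pCons.prems(2)[of 0] by simp
  show ?case
  proof (cases "p = 0")
    case True then show ?thesis using pCons.hyps a by simp
  next
    case False
    have "\<And>i. coeff p i \<ge> 0" using pCons.prems(2) by (metis coeff_pCons_Suc)
    then have "poly p t > 0" using pCons.IH False pCons.prems(3) by blast
    then have "t * poly p t > 0" using pCons.prems(3) by simp
    then show ?thesis using a by simp
  qed
qed

definition LCg :: "real poly \<Rightarrow> bool" where
  "LCg q \<longleftrightarrow> (\<forall>j. coeff q j * coeff q (j+2) \<le> (coeff q (j+1))^2)"
definition NIZ :: "real poly \<Rightarrow> bool" where
  "NIZ q \<longleftrightarrow> (\<forall>i j k. i \<le> j \<longrightarrow> j \<le> k \<longrightarrow> coeff q i > 0 \<longrightarrow> coeff q k > 0 \<longrightarrow> coeff q j > 0)"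
definition NN :: "real poly \<Rightarrow> bool" where
  "NN q \<longleftrightarrow> (\<forall>i. coeff q i \<ge> 0)"

lemma coeff_lin_mult: "coeff ([:a,1:] * (q::real poly)) j = a * coeff q j + (case j of 0 \<Rightarrow> 0 | Suc k \<Rightarrow> coeff q k)"
proof -
  have e: "[:a,1:] * q = smult a q + pCons 0 ([:1:] * q)" by (rule mult_pCons_left)
  have "[:1:] * q = q" by (subst pCons_one) simp
  then have "[:a,1:] * q = smult a q + pCons 0 q" using e by simp
  then show ?thesis by (simp add: coeff_pCons split: nat.splits)
qed

lemma NN_mult: "a \<ge> 0 \<Longrightarrow> NN q \<Longrightarrow> NN ([:a,1:] * q)"
  unfolding NN_def coeff_lin_mult by (auto split: nat.splits)

definition SUPP :: "real poly \<Rightarrow> nat \<Rightarrow> nat \<Rightarrow> bool" where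
  "SUPP q lo hi \<longleftrightarrow> lo \<le> hi \<and> (\<forall>j. coeff q j > 0 \<longleftrightarrow> lo \<le> j \<and> j \<le> hi)"

lemma lin_pos_iff:
  assumes a: "a \<ge> 0" and nn: "NN q"
  shows "coeff ([:a,1:] * q) j > 0 \<longleftrightarrow> (a > 0 \<and> coeff q j > 0) \<or> (j > 0 \<and> coeff q (j - 1) > 0)"
proof -
  have n1: "coeff q j \<ge> 0" "coeff q (j - 1) \<ge> 0" using nn by (auto simp: NN_def)
  show ?thesis
  proof (cases j)
    case 0 then show ?thesis unfolding coeff_lin_mult using a n1 by (auto simp: zero_less_mult_iff)
  next
    case (Suc y)
    have e: "a * coeff q j > 0 \<longleftrightarrow> (a > 0 \<and> coeff q j > 0)" using a n1 by (auto simp: zero_less_mult_iff)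
    have f: "a * coeff q j \<ge> 0" using a n1 by simp
    have g: "coeff q y \<ge> 0" using n1 Suc by simp
    have "coeff ([:a,1:] * q) j = a * coeff q j + coeff q y" unfolding coeff_lin_mult Suc by simp
    moreover have "(0 < j \<and> 0 < coeff q (j - 1)) \<longleftrightarrow> 0 < coeff q y" using Suc by simp
    ultimately show ?thesis using e f g by (smt (verit))
  qed
qed

lemma SUPP_mult:
  assumes a: "a \<ge> 0" and nn: "NN q" and S: "SUPP q lo hi"
  shows "SUPP ([:a,1:] * q) (if a > 0 then lo else lo + 1) (hi + 1)"
proof -
  have lohi: "lo \<le> hi" and Sj: "\<And>j. coeff q j > 0 \<longleftrightarrow> lo \<le> j \<and> j \<le> hi" using S by (auto simp: SUPP_def)
  have "coeff ([:a,1:] * q) j > 0 \<longleftrightarrow> (if a > 0 then lo else lo + 1) \<le> j \<and> j \<le> hi + 1" for j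
    unfolding lin_pos_iff[OF a nn] Sj[of j] Sj[of "j-1"] using lohi by (cases "a > 0"; cases j) auto
  then show ?thesis using lohi by (simp add: SUPP_def)
qed

lemma SUPP_NIZ: "SUPP q lo hi \<Longrightarrow> NIZ q"
  unfolding NIZ_def
proof (intro allI impI)
  fix i j k assume S: "SUPP q lo hi" and h: "i \<le> j" "j \<le> k" "coeff q i > 0" "coeff q k > 0"
  have Sj: "\<And>j. coeff q j > 0 \<longleftrightarrow> lo \<le> j \<and> j \<le> hi" using S by (auto simp: SUPP_def)
  show "coeff q j > 0" using Sj[of i] Sj[of k] Sj[of j] h by auto
qed

lemma LC_mult:
  assumes a: "a \<ge> 0" and nn: "NN q" and S: "SUPP q lo hi" and L: "LCg q"
  shows "LCg ([:a,1:] * q)"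
  unfolding LCg_def
proof
  fix j
  let ?C = "coeff q"
  let ?E = "coeff ([:a,1:] * q)"
  have nnC: "\<And>i. ?C i \<ge> 0" using nn by (simp add: NN_def)
  have LC: "\<And>k. ?C k * ?C (Suc (Suc k)) \<le> (?C (Suc k))^2" using L by (simp add: LCg_def)
  have E0: "?E 0 = a * ?C 0" by (simp add: coeff_lin_mult)
  have ES: "\<And>k. ?E (Suc k) = a * ?C (Suc k) + ?C k" by (simp add: coeff_lin_mult)
  have M: "?C k * ?C (Suc (Suc (Suc k))) \<le> ?C (Suc k) * ?C (Suc (Suc k))" for k
  proof (cases "?C k > 0 \<and> ?C (Suc (Suc (Suc k))) > 0")
    case False
    then have z: "?C k * ?C (Suc (Suc (Suc k))) = 0" using nnC[of k] nnC[of "Suc (Suc (Suc k))"] by (auto simp: less_le)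
    have nz: "?C (Suc k) * ?C (Suc (Suc k)) \<ge> 0" using nnC by simp
    show ?thesis using z nz by linarith
  next
    case True
    have niz: "NIZ q" using SUPP_NIZ[OF S] .
    have p1: "?C (Suc k) > 0" by (rule niz[unfolded NIZ_def, rule_format, of k "Suc k" "Suc (Suc (Suc k))"]) (use True in auto)
    have p2: "?C (Suc (Suc k)) > 0" by (rule niz[unfolded NIZ_def, rule_format, of k "Suc (Suc k)" "Suc (Suc (Suc k))"]) (use True in auto)
    have "(?C (Suc k) * ?C (Suc (Suc k))) * (?C k * ?C (Suc (Suc (Suc k)))) = (?C k * ?C (Suc (Suc k))) * (?C (Suc k) * ?C (Suc (Suc (Suc k))))"
      by (simp only: ac_simps)
    also have "\<dots> \<le> (?C (Suc k))^2 * (?C (Suc (Suc k)))^2"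
      by (rule mult_mono[OF LC[of k] LC[of "Suc k"]]) (simp_all add: nnC)
    also have "\<dots> = (?C (Suc k) * ?C (Suc (Suc k))) * (?C (Suc k) * ?C (Suc (Suc k)))"
      by (simp only: power2_eq_square ac_simps)
    finally show ?thesis using p1 p2 by (simp add: mult_le_cancel_left_pos)
  qed
  show "?E j * ?E (j+2) \<le> (?E (j+1))^2"
  proof (cases j)
    case 0
    let ?c0 = "?C 0" and ?c1 = "?C (Suc 0)" and ?c2 = "?C (Suc (Suc 0))"
    have id: "(a * ?c1 + ?c0)^2 - (a * ?c0) * (a * ?c2 + ?c1) = a^2 * (?c1^2 - ?c0 * ?c2) + a * (?c0 * ?c1) + ?c0^2"
      by (simp add: algebra_simps power2_eq_square)
    have t1: "a^2 * (?c1^2 - ?c0 * ?c2) \<ge> 0" using LC[of 0] by simp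
    have t2: "a * (?c0 * ?c1) \<ge> 0" using a nnC by simp
    have t3: "?c0^2 \<ge> 0" by simp
    have e: "?E j = a * ?c0" "?E (j+1) = a * ?c1 + ?c0" "?E (j+2) = a * ?c2 + ?c1"
      using E0 ES 0 by (simp_all add: numeral_2_eq_2)
    show ?thesis unfolding e using id t1 t2 t3 by linarith
  next
    case (Suc k)
    let ?c0 = "?C k" and ?c1 = "?C (Suc k)" and ?c2 = "?C (Suc (Suc k))" and ?c3 = "?C (Suc (Suc (Suc k)))"
    have id: "(a * ?c2 + ?c1)^2 - (a * ?c1 + ?c0) * (a * ?c3 + ?c2)
          = a^2 * (?c2^2 - ?c1 * ?c3) + a * (?c1 * ?c2 - ?c0 * ?c3) + (?c1^2 - ?c0 * ?c2)"
      by (simp add: algebra_simps power2_eq_square)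
    have t1: "a^2 * (?c2^2 - ?c1 * ?c3) \<ge> 0" using LC[of "Suc k"] by simp
    have t2: "a * (?c1 * ?c2 - ?c0 * ?c3) \<ge> 0" using M[of k] a by simp
    have t3: "?c1^2 - ?c0 * ?c2 \<ge> 0" using LC[of k] by simp
    have e: "?E j = a * ?c1 + ?c0" "?E (j+1) = a * ?c2 + ?c1" "?E (j+2) = a * ?c3 + ?c2"
      using ES Suc by (simp_all add: numeral_2_eq_2)
    show ?thesis unfolding e using id t1 t2 t3 by linarith
  qed
qed

lemma prod_props:
  assumes "\<forall>r\<in>set rs. r \<le> 0"
  shows "NN (\<Prod>r\<leftarrow>rs. [:-r,1:]) \<and> LCg (\<Prod>r\<leftarrow>rs. [:-r,1:]) \<and> (\<exists>lo hi. SUPP (\<Prod>r\<leftarrow>rs. [:-r,1:]) lo hi)"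
  using assms
proof (induction rs)
  case Nil
  have "NN 1" by (simp add: NN_def coeff_1)
  moreover have "LCg 1" by (simp add: LCg_def coeff_1)
  moreover have "SUPP 1 0 0" by (simp add: SUPP_def coeff_1)
  ultimately show ?case by auto
next
  case (Cons r rs)
  let ?q = "\<Prod>r\<leftarrow>rs. [:-r,1:]"
  have a: "-r \<ge> 0" using Cons.prems by simp
  have IH: "NN ?q" "LCg ?q" and "\<exists>lo hi. SUPP ?q lo hi" using Cons by auto
  then obtain lo hi where S: "SUPP ?q lo hi" by blast
  have "(\<Prod>r\<leftarrow>r#rs. [:-r,1:]) = [:-r,1:] * ?q" by simp
  then show ?case using NN_mult[OF a IH(1)] LC_mult[OF a IH(1) S IH(2)] SUPP_mult[OF a IH(1) S] by auto
qed

lemma prop_dec: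
  fixes C :: "nat \<Rightarrow> real"
  assumes nn: "\<And>i. C i \<ge> 0" and lc: "\<And>j. C j * C (Suc (Suc j)) \<le> (C (Suc j))^2"
   and niz: "\<And>i j k. i \<le> j \<Longrightarrow> j \<le> k \<Longrightarrow> C i > 0 \<Longrightarrow> C k > 0 \<Longrightarrow> C j > 0"
   and ci: "C i > 0" and d: "C (Suc i) \<le> C i"
  shows "i \<le> j \<Longrightarrow> C (Suc j) \<le> C j"
proof (induction j rule: dec_induct)
  case base then show ?case using d .
next
  case (step j)
  show ?case
  proof (cases "C (Suc j) > 0")
    case False
    then have z: "C (Suc j) = 0" using nn[of "Suc j"] by simp
    show ?thesis
    proof (rule ccontr)
      assume "\<not> C (Suc (Suc j)) \<le> C (Suc j)"
      then have "C (Suc (Suc j)) > 0" using z by simp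
      then have "C (Suc j) > 0" using niz[of i "Suc j" "Suc (Suc j)"] ci step.hyps by simp
      then show False using z by simp
    qed
  next
    case True
    have "C (Suc j) * C (Suc (Suc j)) \<le> C j * C (Suc (Suc j))"
      using step.IH nn by (intro mult_right_mono) auto
    also have "\<dots> \<le> C (Suc j) * C (Suc j)" using lc[of j] by (simp add: power2_eq_square)
    finally show ?thesis using True by (simp add: mult_le_cancel_left_pos)
  qed
qed

lemma inc_chain:
  fixes C :: "nat \<Rightarrow> real"
  assumes "\<And>i. i < k \<Longrightarrow> C i \<le> C (Suc i)"
  shows "i \<le> j \<Longrightarrow> j \<le> k \<Longrightarrow> C i \<le> C j"
proof (induction j)
  case 0 then show ?case by simp
next
  case (Suc j)
  show ?case
  proof (cases "i = Suc j")
    case True then show ?thesis by simp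
  next
    case False
    then have "C i \<le> C j" using Suc by simp
    also have "C j \<le> C (Suc j)" using assms Suc.prems by simp
    finally show ?thesis .
  qed
qed

lemma dec_chain:
  fixes C :: "nat \<Rightarrow> real"
  assumes "\<And>i. k \<le> i \<Longrightarrow> C (Suc i) \<le> C i"
  shows "k \<le> i \<Longrightarrow> i \<le> j \<Longrightarrow> C j \<le> C i"
proof (induction j)
  case 0 then show ?case by simp
next
  case (Suc j)
  show ?case
  proof (cases "i = Suc j")
    case True then show ?thesis by simp
  next
    case False
    then have "C j \<le> C i" using Suc by simp
    moreover have "C (Suc j) \<le> C j" using assms Suc.prems False by simp
    ultimately show ?thesis by simp
  qed
qed

lemma unimodal_from:
  assumes nn: "NN p" and lc: "LCg p" and S: "SUPP p lo hi"
  shows "unimodal_poly p"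
proof -
  let ?C = "coeff p"
  have nnC: "\<And>i. ?C i \<ge> 0" using nn by (simp add: NN_def)
  have lcC: "\<And>j. ?C j * ?C (Suc (Suc j)) \<le> (?C (Suc j))^2" using lc by (simp add: LCg_def)
  have nizC: "\<And>i j k. i \<le> j \<Longrightarrow> j \<le> k \<Longrightarrow> ?C i > 0 \<Longrightarrow> ?C k > 0 \<Longrightarrow> ?C j > 0"
    using SUPP_NIZ[OF S] unfolding NIZ_def by blast
  have lohi: "lo \<le> hi" and Sj: "\<And>j. ?C j > 0 \<longleftrightarrow> lo \<le> j \<and> j \<le> hi" using S by (auto simp: SUPP_def)
  define m where "m = Max (?C ` {lo..hi})"
  have "m \<in> ?C ` {lo..hi}" unfolding m_def using lohi by (intro Max_in) auto
  then obtain k where k: "k \<in> {lo..hi}" "?C k = m" by blast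
  have ck: "?C k > 0" using Sj k by auto
  have kmax: "?C j \<le> ?C k" for j
  proof (cases "j \<in> {lo..hi}")
    case True then show ?thesis using k unfolding m_def by simp
  next
    case False then have "?C j = 0" using Sj nnC[of j] by (auto simp: less_le)
    then show ?thesis using ck by simp
  qed
  have B: "?C (Suc i) \<le> ?C i" if "k \<le> i" for i
    using prop_dec[of ?C k, OF nnC lcC nizC ck kmax that] .
  have A: "?C i \<le> ?C (Suc i)" if "i < k" for i
  proof (rule ccontr)
    assume "\<not> ?C i \<le> ?C (Suc i)"
    then have lt: "?C (Suc i) < ?C i" by simp
    then have ci: "?C i > 0" using nnC[of "Suc i"] by simp
    have D: "\<And>j. i \<le> j \<Longrightarrow> ?C (Suc j) \<le> ?C j"
      using prop_dec[of ?C i, OF nnC lcC nizC ci] lt by simp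
    have "?C k \<le> ?C (Suc i)" using dec_chain[of i ?C "Suc i" k] D that by simp
    then show False using lt kmax[of i] by simp
  qed
  show ?thesis unfolding unimodal_poly_def
    using inc_chain[of k ?C] A dec_chain[of k ?C] B by blast
qed

lemma rr_unimodal:
  assumes rr: "real_rooted p" and nn: "NN p"
  shows "unimodal_poly p"
proof (cases "p = 0")
  case True then show ?thesis by (simp add: unimodal_poly_def)
next
  case False
  obtain c rs where c: "c \<noteq> 0" and p: "p = smult c (\<Prod>r\<leftarrow>rs. [:-r,1:])"
    using rr_factor[OF rr False] by blast
  let ?q = "\<Prod>r\<leftarrow>rs. [:-r,1:]"
  have roots: "\<forall>r\<in>set rs. r \<le> 0"
  proof
    fix r assume r: "r \<in> set rs"
    have "poly ?q r = 0" using r by (induction rs) auto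
    then have pr: "poly p r = 0" by (simp add: p)
    show "r \<le> 0"
    proof (rule ccontr)
      assume "\<not> r \<le> 0"
      then have "poly p r > 0" using poly_pos[OF False] nn by (simp add: NN_def)
      then show False using pr by simp
    qed
  qed
  obtain lo hi where S: "SUPP ?q lo hi" and nq: "NN ?q" and lq: "LCg ?q" using prod_props[OF roots] by blast
  have qlo: "coeff ?q lo > 0" using S by (simp add: SUPP_def)
  have "coeff p lo = c * coeff ?q lo" by (simp add: p)
  moreover have "coeff p lo \<ge> 0" using nn by (simp add: NN_def)
  ultimately have "c * coeff ?q lo \<ge> 0" by simp
  then have cpos: "c > 0" using qlo c by (simp add: zero_le_mult_iff)
  have "NN p" by fact
  moreover have "LCg p"
  proof -
    have "coeff p j * coeff p (j+2) = c^2 * (coeff ?q j * coeff ?q (j+2))" for j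
      by (simp add: p power2_eq_square)
    moreover have "(coeff p (j+1))^2 = c^2 * (coeff ?q (j+1))^2" for j
      by (simp add: p power_mult_distrib)
    ultimately show ?thesis using lq unfolding LCg_def by (simp add: mult_left_mono)
  qed
  moreover have "SUPP p lo hi"
    using S cpos by (simp add: SUPP_def p zero_less_mult_iff)
  ultimately show ?thesis by (rule unimodal_from)
qed

definition predN :: "'n::{finite,wellorder} \<Rightarrow> 'n" where
  "predN i = Max {j. j < i}"

definition prevval :: "('n::{finite,wellorder} \<Rightarrow> real) \<Rightarrow> 'n \<Rightarrow> real" where
  "prevval w i = (if (\<exists>j. j < i) then w (predN i) else 0)"

lemma predN_iff:
  fixes i :: "'n::{finite,wellorder}"
  assumes "\<exists>j. j < i"
  shows "j < i \<longleftrightarrow> j \<le> predN i"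
proof -
  have fin: "finite {j. j < i}" by simp
  have ne: "{j. j < i} \<noteq> {}" using assms by auto
  have m: "predN i < i" using Max_in[OF fin ne] by (simp add: predN_def)
  show ?thesis
  proof
    assume "j < i" then show "j \<le> predN i" unfolding predN_def using fin by (intro Max_ge) auto
  next
    assume "j \<le> predN i" then show "j < i" using m by simp
  qed
qed

lemma predN_less: "\<exists>j. j < i \<Longrightarrow> predN i < (i::'n::{finite,wellorder})"
  using predN_iff[of i "predN i"] by simp

lemma sum_le_decomp:
  fixes f :: "'n::{finite,wellorder} \<Rightarrow> real"
  shows "(\<Sum>j\<in>{j\<in>J. j \<le> i}. f j) = (if i \<in> J then f i else 0) +
          (if \<exists>j. j < i then (\<Sum>j\<in>{j\<in>J. j \<le> predN i}. f j) else 0)"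
proof -
  have A: "{j\<in>J. j \<le> i} = (if i \<in> J then {i} else {}) \<union> {j\<in>J. j < i}" by (auto simp: le_less)
  have B: "(\<Sum>j\<in>{j\<in>J. j \<le> i}. f j) = (if i \<in> J then f i else 0) + (\<Sum>j\<in>{j\<in>J. j < i}. f j)"
    unfolding A by (subst sum.union_disjoint) auto
  show ?thesis
  proof (cases "\<exists>j. j < i")
    case True
    then have "{j\<in>J. j < i} = {j\<in>J. j \<le> predN i}" using predN_iff by blast
    then show ?thesis using B True by simp
  next
    case False
    then have "{j\<in>J. j < i} = {}" by auto
    then show ?thesis using B False by simp
  qed
qed

definition chainN :: "(real \<Rightarrow> bool) \<Rightarrow> 'n::{finite,wellorder} set \<Rightarrow> ('n \<Rightarrow> real) \<Rightarrow> bool" where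
  "chainN P J w \<longleftrightarrow> (\<forall>i. if i \<in> J then P (w i - prevval w i) else w i = prevval w i)"

lemma sum_imp_diff:
  fixes w :: "'n::{finite,wellorder} \<Rightarrow> real"
  assumes "\<And>i. w i = (\<Sum>j\<in>{j\<in>J. j \<le> i}. \<mu> j)"
  shows "w i - prevval w i = (if i \<in> J then \<mu> i else 0)"
  using sum_le_decomp[where J=J and i=i and f=\<mu>] assms[of i] assms[of "predN i"] by (auto simp: prevval_def)

lemma diff_imp_sum:
  fixes w :: "'n::{finite,wellorder} \<Rightarrow> real"
  assumes "\<And>i. w i - prevval w i = (if i \<in> J then \<mu> i else 0)"
  shows "w i = (\<Sum>j\<in>{j\<in>J. j \<le> i}. \<mu> j)"
proof (induction i rule: less_induct)
  case (less i)
  show ?case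
  proof (cases "\<exists>j. j < i")
    case True
    then have "w (predN i) = (\<Sum>j\<in>{j\<in>J. j \<le> predN i}. \<mu> j)" using less predN_less by blast
    then show ?thesis using sum_le_decomp[where J=J and i=i and f=\<mu>] assms[of i] True by (auto simp: prevval_def)
  next
    case False
    then show ?thesis using sum_le_decomp[where J=J and i=i and f=\<mu>] assms[of i] by (auto simp: prevval_def)
  qed
qed

lemma chainN_iff:
  fixes w :: "'n::{finite,wellorder} \<Rightarrow> real"
  shows "(\<exists>\<mu>. (\<forall>j\<in>J. P (\<mu> j)) \<and> (\<forall>i. w i = (\<Sum>j\<in>{j\<in>J. j \<le> i}. \<mu> j))) \<longleftrightarrow> chainN P J w"
proof
  assume "\<exists>\<mu>. (\<forall>j\<in>J. P (\<mu> j)) \<and> (\<forall>i. w i = (\<Sum>j\<in>{j\<in>J. j \<le> i}. \<mu> j))"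
  then obtain \<mu> where P: "\<forall>j\<in>J. P (\<mu> j)" and w: "\<And>i. w i = (\<Sum>j\<in>{j\<in>J. j \<le> i}. \<mu> j)" by blast
  have d: "w i - prevval w i = (if i \<in> J then \<mu> i else 0)" for i
    using sum_imp_diff[where w=w and J=J and \<mu>=\<mu>, OF w] by blast
  show "chainN P J w" unfolding chainN_def
  proof
    fix i show "if i \<in> J then P (w i - prevval w i) else w i = prevval w i"
      using d[of i] P by (cases "i \<in> J") auto
  qed
next
  assume c: "chainN P J w"
  define \<mu> where "\<mu> i = w i - prevval w i" for i
  have d: "w i - prevval w i = (if i \<in> J then \<mu> i else 0)" for i
    using c unfolding chainN_def \<mu>_def by (metis diff_self)
  have "\<forall>j\<in>J. P (\<mu> j)" using c unfolding chainN_def \<mu>_def by metis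
  moreover have "\<forall>i. w i = (\<Sum>j\<in>{j\<in>J. j \<le> i}. \<mu> j)" using diff_imp_sum[where w=w and J=J and \<mu>=\<mu>, OF d] by blast
  ultimately show "\<exists>\<mu>. (\<forall>j\<in>J. P (\<mu> j)) \<and> (\<forall>i. w i = (\<Sum>j\<in>{j\<in>J. j \<le> i}. \<mu> j))" by blast
qed

definition vtx :: "('n::{finite,wellorder} \<Rightarrow> nat) \<Rightarrow> 'n \<Rightarrow> real^'n::{finite,wellorder}" where
  "vtx s j = (\<chi> i. if j \<le> i then real (s i) else 0)"

lemma vtx_comp:
  "(\<Sum>j\<in>J. \<mu> j *\<^sub>R vtx s j) $ i = real (s i) * (\<Sum>j\<in>{j\<in>J. j \<le> i}. \<mu> j)"
proof -
  have "(\<Sum>j\<in>J. \<mu> j *\<^sub>R vtx s j) $ i = (\<Sum>j\<in>J. \<mu> j * (if j \<le> i then real (s i) else 0))"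
    by (simp add: vtx_def)
  also have "\<dots> = (\<Sum>j\<in>J. if j \<le> i then real (s i) * \<mu> j else 0)"
    by (intro sum.cong) auto
  also have "\<dots> = (\<Sum>j\<in>{j\<in>J. j \<le> i}. real (s i) * \<mu> j)"
    by (simp add: sum.inter_filter)
  finally show ?thesis by (simp add: sum_distrib_left)
qed

lemma vtx_inj: "(\<And>i. s i > 0) \<Longrightarrow> inj (vtx s)"
proof (rule injI)
  fix a b assume s: "\<And>i. s i > 0" and e: "vtx s a = vtx s b"
  show "a = b"
  proof (rule ccontr)
    assume "a \<noteq> b"
    then consider "a < b" | "b < a" by (metis linorder_neqE)
    then show False
    proof cases
      case 1 then have "vtx s a $ a \<noteq> vtx s b $ a" using s[of a] by (simp add: vtx_def)
      then show False using e by simp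
    next
      case 2 then have "vtx s a $ b \<noteq> vtx s b $ b" using s[of b] by (simp add: vtx_def)
      then show False using e by simp
    qed
  qed
qed

lemma vtx_ne0: "(\<And>i. s i > 0) \<Longrightarrow> vtx s j \<noteq> 0"
proof
  assume s: "\<And>i. s i > 0" and "vtx s j = 0"
  then have "vtx s j $ j = 0" by simp
  then show False using s[of j] by (simp add: vtx_def)
qed

lemma prevval_0: "prevval (\<lambda>i. 0) i = 0" by (simp add: prevval_def)

lemma vtx_indep:
  assumes s: "\<And>i. s i > 0"
  shows "\<not> affine_dependent (insert 0 (range (vtx s)))"
proof -
  have n0: "0 \<notin> range (vtx s)" using vtx_ne0[of s, OF s] by (metis rangeE)
  have "\<not> dependent (range (vtx s))"
  proof
    assume "dependent (range (vtx s))"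
    then obtain u where u: "\<exists>v\<in>range (vtx s). u v \<noteq> 0" "(\<Sum>v\<in>range (vtx s). u v *\<^sub>R v) = 0"
      using dependent_finite[of "range (vtx s)"] by auto
    define \<mu> where "\<mu> j = u (vtx s j)" for j
    have "(\<Sum>v\<in>range (vtx s). u v *\<^sub>R v) = (\<Sum>j\<in>UNIV. \<mu> j *\<^sub>R vtx s j)"
      unfolding \<mu>_def by (subst sum.reindex[OF vtx_inj[of s, OF s]]) simp
    then have z: "(\<Sum>j\<in>UNIV. \<mu> j *\<^sub>R vtx s j) = 0" using u by simp
    have "(\<lambda>i. 0::real) i = (\<Sum>j\<in>{j\<in>UNIV. j \<le> i}. \<mu> j)" for i
    proof -
      have "(\<Sum>j\<in>UNIV. \<mu> j *\<^sub>R vtx s j) $ i = 0" using z by simp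
      then have "real (s i) * (\<Sum>j\<in>{j\<in>UNIV. j \<le> i}. \<mu> j) = 0" by (simp only: vtx_comp)
      then show ?thesis using s[of i] by simp
    qed
    then have "(\<lambda>i. 0::real) i - prevval (\<lambda>i. 0) i = (if i \<in> UNIV then \<mu> i else 0)" for i
      using sum_imp_diff[where w="\<lambda>i. 0" and J=UNIV and \<mu>=\<mu>] by blast
    then have "\<mu> i = 0" for i by (simp add: prevval_0)
    then show False using u(1) by (auto simp: \<mu>_def)
  qed
  then show ?thesis using affine_dependent_iff_dependent[OF n0] by simp
qed

lemma sum_vset:
  assumes s: "\<And>i. s i > 0"
  shows "(\<Sum>x\<in>insert 0 (range (vtx s)). f x) = f 0 + (\<Sum>j\<in>UNIV. f (vtx s j))"
proof -
  have n0: "0 \<notin> range (vtx s)" using vtx_ne0[of s, OF s] by (metis rangeE)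
  have "(\<Sum>x\<in>insert 0 (range (vtx s)). f x) = f 0 + (\<Sum>x\<in>range (vtx s). f x)"
    using n0 by simp
  also have "(\<Sum>x\<in>range (vtx s). f x) = (\<Sum>j\<in>UNIV. f (vtx s j))"
    by (subst sum.reindex[OF vtx_inj[of s, OF s]]) simp
  finally show ?thesis .
qed

lemma sum_le_Max:
  fixes \<mu> :: "'n::{finite,wellorder} \<Rightarrow> real"
  shows "(\<Sum>j\<in>{j\<in>J. j \<le> Max UNIV}. \<mu> j) = (\<Sum>j\<in>J. \<mu> j)"
proof -
  have "{j\<in>J. j \<le> Max UNIV} = J" by auto
  then show ?thesis by simp
qed

lemma LHS_hull:
  assumes s: "\<And>i. s i > 0"
  shows "lecture_hall_simplex s = convex hull (insert 0 (range (vtx s)))"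
proof -
  let ?V = "insert 0 (range (vtx s))"
  have finV: "finite ?V" by simp
  show ?thesis
  proof (rule set_eqI)
    fix x
    have "x \<in> convex hull ?V \<longleftrightarrow> (\<exists>u. (\<forall>y\<in>?V. 0 \<le> u y) \<and> sum u ?V = 1 \<and> (\<Sum>y\<in>?V. u y *\<^sub>R y) = x)"
      using convex_hull_finite[OF finV] by blast
    also have "\<dots> \<longleftrightarrow> x \<in> lecture_hall_simplex s"
    proof
      assume "\<exists>u. (\<forall>y\<in>?V. 0 \<le> u y) \<and> sum u ?V = 1 \<and> (\<Sum>y\<in>?V. u y *\<^sub>R y) = x"
      then obtain u where u0: "\<forall>y\<in>?V. 0 \<le> u y" and u1: "sum u ?V = 1" and ux: "(\<Sum>y\<in>?V. u y *\<^sub>R y) = x"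
        by blast
      define \<mu> where "\<mu> j = u (vtx s j)" for j
      have x: "x = (\<Sum>j\<in>UNIV. \<mu> j *\<^sub>R vtx s j)" using ux sum_vset[of s, OF s, of "\<lambda>y. u y *\<^sub>R y"] by (simp add: \<mu>_def)
      have sum1: "u 0 + (\<Sum>j\<in>UNIV. \<mu> j) = 1" using u1 sum_vset[of s, OF s, of u] by (simp add: \<mu>_def)
      have mu0: "\<mu> j \<ge> 0" for j using u0 by (simp add: \<mu>_def)
      have w: "x $ i / real (s i) = (\<Sum>j\<in>{j\<in>UNIV. j \<le> i}. \<mu> j)" for i
        unfolding x vtx_comp using s[of i] by simp
      have le1: "(\<Sum>j\<in>{j\<in>UNIV. j \<le> i}. \<mu> j) \<le> 1" for i
      proof -
        have "(\<Sum>j\<in>{j\<in>UNIV. j \<le> i}. \<mu> j) \<le> (\<Sum>j\<in>UNIV. \<mu> j)" using mu0 by (intro sum_mono2) auto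
        also have "\<dots> \<le> 1" using sum1 u0 by simp
        finally show ?thesis .
      qed
      have mono: "(\<Sum>j\<in>{j\<in>UNIV. j \<le> i}. \<mu> j) \<le> (\<Sum>j\<in>{j\<in>UNIV. j \<le> i'}. \<mu> j)" if "i \<le> i'" for i i'
        using mu0 that by (intro sum_mono2) auto
      show "x \<in> lecture_hall_simplex s"
        unfolding lecture_hall_simplex_def using w le1 mono mu0 by (auto intro: sum_nonneg)
    next
      assume x: "x \<in> lecture_hall_simplex s"
      define w where "w i = x $ i / real (s i)" for i
      have w01: "0 \<le> w i" "w i \<le> 1" for i using x by (auto simp: lecture_hall_simplex_def w_def)
      have wmono: "i \<le> i' \<Longrightarrow> w i \<le> w i'" for i i' using x by (auto simp: lecture_hall_simplex_def w_def)
      have "chainN (\<lambda>t. t \<ge> 0) UNIV w"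
        unfolding chainN_def
      proof
        fix i :: 'a
        show "if i \<in> UNIV then w i - prevval w i \<ge> 0 else w i = prevval w i"
        proof (cases "\<exists>j. j < i")
          case True
          then have "predN i < i" by (rule predN_less)
          then have "w (predN i) \<le> w i" by (intro wmono) simp
          then show ?thesis using True by (simp add: prevval_def)
        next
          case False then show ?thesis using w01[of i] by (simp add: prevval_def)
        qed
      qed
      then obtain \<mu> where mu0: "\<forall>j\<in>UNIV. \<mu> j \<ge> 0" and wmu: "\<forall>i. w i = (\<Sum>j\<in>{j\<in>UNIV. j \<le> i}. \<mu> j)"
        using chainN_iff[where P="\<lambda>t. t \<ge> 0" and J=UNIV and w=w] by blast
      have smu: "(\<Sum>j\<in>UNIV. \<mu> j) = w (Max UNIV)" using wmu sum_le_Max[where J=UNIV and \<mu>=\<mu>] by simp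
      define u where "u y = (if y = 0 then 1 - (\<Sum>j\<in>UNIV. \<mu> j) else \<mu> (inv (vtx s) y))" for y
      have uv: "u (vtx s j) = \<mu> j" for j
        using vtx_ne0[of s, OF s] inv_f_f[OF vtx_inj[of s, OF s]] by (simp add: u_def)
      have "\<forall>y\<in>?V. 0 \<le> u y" using mu0 w01 smu uv by (auto simp: u_def)
      moreover have "sum u ?V = 1" using sum_vset[of s, OF s, of u] uv by (simp add: u_def)
      moreover have "(\<Sum>y\<in>?V. u y *\<^sub>R y) = x"
      proof -
        have "(\<Sum>y\<in>?V. u y *\<^sub>R y) = (\<Sum>j\<in>UNIV. \<mu> j *\<^sub>R vtx s j)"
          using sum_vset[of s, OF s, of "\<lambda>y. u y *\<^sub>R y"] uv by simp
        also have "\<dots> = x"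
        proof (rule vec_eq_iff[THEN iffD2], rule allI)
          fix i show "(\<Sum>j\<in>UNIV. \<mu> j *\<^sub>R vtx s j) $ i = x $ i"
          proof -
            have "x $ i / real (s i) = (\<Sum>j\<in>{j\<in>UNIV. j \<le> i}. \<mu> j)" using wmu by (simp add: w_def)
            then show ?thesis unfolding vtx_comp using s[of i] by (simp add: field_simps)
          qed
        qed
        finally show ?thesis .
      qed
      ultimately show "\<exists>u. (\<forall>y\<in>?V. 0 \<le> u y) \<and> sum u ?V = 1 \<and> (\<Sum>y\<in>?V. u y *\<^sub>R y) = x" by blast
    qed
    finally show "x \<in> lecture_hall_simplex s \<longleftrightarrow> x \<in> convex hull ?V" by simp
  qed
qed

definition Tset :: "('n::{finite,wellorder} \<Rightarrow> nat) \<Rightarrow> 'n set \<Rightarrow> bool \<Rightarrow> (real^'n::{finite,wellorder}) set" where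
  "Tset s J og = vtx s ` J \<union> (if og then {0} else {})"

definition hcond :: "bool \<Rightarrow> real \<Rightarrow> real \<Rightarrow> bool" where
  "hcond og wl h \<longleftrightarrow> (if og then 0 < h - wl \<and> h - wl < 1 else h = wl)"

definition Pint :: "real \<Rightarrow> bool" where "Pint t \<longleftrightarrow> 0 < t \<and> t < 1"

lemma sum_T:
  assumes sa: "\<forall>i. s i > 0"
  shows "(\<Sum>t\<in>Tset s J og. f t) = (\<Sum>j\<in>J. f (vtx s j)) + (if og then f 0 else 0)"
proof -
  have s: "\<And>i. s i > 0" using sa by blast
  have n0: "0 \<notin> vtx s ` J" using vtx_ne0[of s, OF s] by auto
  have "(\<Sum>t\<in>Tset s J og. f t) = (\<Sum>t\<in>vtx s ` J. f t) + (\<Sum>t\<in>(if og then {0} else {}). f t)"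
    unfolding Tset_def using n0 by (subst sum.union_disjoint) auto
  also have "(\<Sum>t\<in>vtx s ` J. f t) = (\<Sum>j\<in>J. f (vtx s j))"
    using vtx_inj[of s, OF s] by (subst sum.reindex) (auto intro: inj_on_subset)
  finally show ?thesis by simp
qed

lemma vec_of_sum:
  "(\<Sum>j\<in>J. \<mu> j *\<^sub>R vtx s j) = (\<chi> i. real (s i) * (\<Sum>j\<in>{j\<in>J. j \<le> i}. \<mu> j))"
  by (rule vec_eq_iff[THEN iffD2]) (simp only: vtx_comp vec_lambda_beta, simp)

lemma OPP_char:
  assumes s: "\<And>i. s i > 0"
  shows "open_parallelepiped (Tset s J og) =
    {((\<chi> i. real (s i) * w i), h) | w h. chainN Pint J w \<and> hcond og (w (Max UNIV)) h}"
proof -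
  have sa: "\<forall>i. s i > 0" using s by blast
  show ?thesis
proof (rule set_eqI, rule iffI)
  fix p assume "p \<in> open_parallelepiped (Tset s J og)"
  then obtain l where l: "\<forall>t\<in>Tset s J og. 0 < l t \<and> l t < 1"
    and p: "p = (\<Sum>t\<in>Tset s J og. l t *\<^sub>R t, \<Sum>t\<in>Tset s J og. l t)"
    unfolding open_parallelepiped_def by blast
  define \<mu> where "\<mu> j = l (vtx s j)" for j
  define w where "w i = (\<Sum>j\<in>{j\<in>J. j \<le> i}. \<mu> j)" for i
  have muP: "\<forall>j\<in>J. Pint (\<mu> j)" using l by (auto simp: \<mu>_def Pint_def Tset_def)
  have ch: "chainN Pint J w" using chainN_iff[where P=Pint and J=J and w=w] muP w_def by blast
  have p1: "fst p = (\<chi> i. real (s i) * w i)"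
    using p sum_T[OF sa, where J=J and og=og and f="\<lambda>t. l t *\<^sub>R t"] by (simp add: vec_of_sum w_def \<mu>_def)
  have wM: "w (Max UNIV) = (\<Sum>j\<in>J. \<mu> j)" unfolding w_def by (rule sum_le_Max)
  have p2: "snd p = (\<Sum>j\<in>J. \<mu> j) + (if og then l 0 else 0)"
    using p sum_T[OF sa, where J=J and og=og and f=l] by (simp add: \<mu>_def)
  have hc: "hcond og (w (Max UNIV)) (snd p)"
    using p2 wM l by (auto simp: hcond_def Tset_def)
  show "p \<in> {((\<chi> i. real (s i) * w i), h) | w h. chainN Pint J w \<and> hcond og (w (Max UNIV)) h}"
    unfolding mem_Collect_eq
    by (rule exI[of _ w], rule exI[of _ "snd p"]) (use ch hc p1 in \<open>simp add: prod_eq_iff\<close>)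
next
  fix p assume "p \<in> {((\<chi> i. real (s i) * w i), h) | w h. chainN Pint J w \<and> hcond og (w (Max UNIV)) h}"
  then obtain w h where p: "p = ((\<chi> i. real (s i) * w i), h)" and ch: "chainN Pint J w"
    and hc: "hcond og (w (Max UNIV)) h" by blast
  obtain \<mu> where muP: "\<forall>j\<in>J. Pint (\<mu> j)" and wmu: "\<forall>i. w i = (\<Sum>j\<in>{j\<in>J. j \<le> i}. \<mu> j)"
    using chainN_iff[where P=Pint and J=J and w=w] ch by blast
  have wM: "w (Max UNIV) = (\<Sum>j\<in>J. \<mu> j)" using wmu sum_le_Max[where J=J and \<mu>=\<mu>] by simp
  define l where "l t = (if t = 0 then h - w (Max UNIV) else \<mu> (inv (vtx s) t))" for t
  have lv: "l (vtx s j) = \<mu> j" for j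
    using vtx_ne0[of s, OF s] inv_f_f[OF vtx_inj[of s, OF s]] by (simp add: l_def)
  have l0: "l 0 = h - w (Max UNIV)" by (simp add: l_def)
  have lT: "\<forall>t\<in>Tset s J og. 0 < l t \<and> l t < 1"
    using muP lv hc by (auto simp: Tset_def Pint_def hcond_def l_def split: if_splits)
  have e1: "(\<Sum>t\<in>Tset s J og. l t *\<^sub>R t) = (\<chi> i. real (s i) * w i)"
    using sum_T[OF sa, where J=J and og=og and f="\<lambda>t. l t *\<^sub>R t"] wmu by (simp add: lv vec_of_sum)
  have e2: "(\<Sum>t\<in>Tset s J og. l t) = h"
    using sum_T[OF sa, where J=J and og=og and f=l] wM hc l0 by (simp add: lv hcond_def split: if_splits)
  show "p \<in> open_parallelepiped (Tset s J og)"
    unfolding open_parallelepiped_def p mem_Collect_eq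
    by (rule exI[of _ l]) (use lT e1 e2 in simp)
qed
qed

definition Wset :: "('n::{finite,wellorder} \<Rightarrow> nat) \<Rightarrow> 'n set \<Rightarrow> ('n \<Rightarrow> real) set" where
  "Wset s J = {w. chainN Pint J w \<and> (\<forall>i. real (s i) * w i \<in> \<int>)}"

definition validh :: "bool \<Rightarrow> real \<Rightarrow> bool" where
  "validh og wl \<longleftrightarrow> (if og then wl \<notin> \<int> else wl \<in> \<int>)"

definition Hf :: "bool \<Rightarrow> real \<Rightarrow> real" where
  "Hf og wl = (if og then of_int (\<lfloor>wl\<rfloor> + 1) else wl)"

lemma hcond_iff: "(hcond og wl h \<and> h \<in> \<int>) \<longleftrightarrow> (validh og wl \<and> h = Hf og wl)"
proof (cases og)
  case False then show ?thesis by (auto simp: hcond_def validh_def Hf_def)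
next
  case True
  show ?thesis
  proof
    assume a: "hcond og wl h \<and> h \<in> \<int>"
    then obtain k where k: "h = of_int k" by (auto elim: Ints_cases)
    have b: "of_int k - 1 < wl" "wl < of_int k" using a True k by (auto simp: hcond_def)
    then have fl: "\<lfloor>wl\<rfloor> = k - 1" by (intro floor_unique) auto
    have "wl \<notin> \<int>"
    proof
      assume "wl \<in> \<int>" then obtain m where "wl = of_int m" by (auto elim: Ints_cases)
      then show False using b by simp
    qed
    then show "validh og wl \<and> h = Hf og wl" using True k fl by (simp add: validh_def Hf_def)
  next
    assume a: "validh og wl \<and> h = Hf og wl"
    then have ni: "wl \<notin> \<int>" and h: "h = of_int (\<lfloor>wl\<rfloor> + 1)" using True by (auto simp: validh_def Hf_def)
    have "of_int \<lfloor>wl\<rfloor> \<noteq> wl" using ni by (metis Ints_of_int)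
    then have "of_int \<lfloor>wl\<rfloor> < wl" by (simp add: less_le)
    then show "hcond og wl h \<and> h \<in> \<int>" using True h by (simp add: hcond_def)
  qed
qed

lemma EE_valid: "wl \<ge> 0 \<Longrightarrow> EE og wl = (if validh og wl then monom 1 (nat \<lfloor>Hf og wl\<rfloor>) else 0)"
  by (auto simp: EE_def validh_def Hf_def nat_add_distrib)

lemma Wset_nonneg:
  assumes "w \<in> Wset s J" shows "w i \<ge> 0"
proof -
  have "chainN Pint J w" using assms by (simp add: Wset_def)
  then obtain \<mu> where muP: "\<forall>j\<in>J. Pint (\<mu> j)" and wmu: "\<forall>i. w i = (\<Sum>j\<in>{j\<in>J. j \<le> i}. \<mu> j)"
    using chainN_iff[where P=Pint and J=J and w=w] by blast
  show ?thesis using wmu muP by (auto intro!: sum_nonneg simp: Pint_def less_imp_le)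
qed

lemma LP_hstar:
  assumes s: "\<And>i. s i > 0" and finW: "finite (Wset s J)"
  shows "(\<Sum>p\<in>lattice_points_open_par (Tset s J og). monom 1 (nat \<lfloor>snd p\<rfloor>)) =
         (\<Sum>w\<in>Wset s J. EE og (w (Max UNIV)))"
proof -
  let ?M = "Max (UNIV::'a set)"
  define Good where "Good = {(w,h). w \<in> Wset s J \<and> hcond og (w ?M) h \<and> h \<in> \<int>}"
  define Mp where "Mp = (\<lambda>(w::'a \<Rightarrow> real, h::real). ((\<chi> i. real (s i) * w i), h))"
  have LP: "lattice_points_open_par (Tset s J og) = Mp ` Good"
  proof (rule set_eqI)
    fix p
    show "p \<in> lattice_points_open_par (Tset s J og) \<longleftrightarrow> p \<in> Mp ` Good"
    proof
      assume "p \<in> lattice_points_open_par (Tset s J og)"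
      then obtain w h where p: "p = ((\<chi> i. real (s i) * w i), h)" and ch: "chainN Pint J w"
        and hc: "hcond og (w ?M) h" and int: "\<forall>i. fst p $ i \<in> \<int>" "snd p \<in> \<int>"
        unfolding lattice_points_open_par_def OPP_char[OF s] by blast
      have "(w,h) \<in> Good" using ch hc int by (simp add: Good_def Wset_def p)
      then show "p \<in> Mp ` Good" by (rule rev_image_eqI) (simp add: Mp_def p)
    next
      assume "p \<in> Mp ` Good"
      then obtain w h where p: "p = ((\<chi> i. real (s i) * w i), h)" and g: "(w,h) \<in> Good"
        by (auto simp: Mp_def)
      have "p \<in> open_parallelepiped (Tset s J og)"
        unfolding OPP_char[OF s] using g p by (auto simp: Good_def Wset_def)
      then show "p \<in> lattice_points_open_par (Tset s J og)"
        using g p by (auto simp: lattice_points_open_par_def Good_def Wset_def)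
    qed
  qed
  have injM: "inj_on Mp Good"
  proof (rule inj_onI)
    fix a b assume ab: "a \<in> Good" "b \<in> Good" "Mp a = Mp b"
    obtain w h where a: "a = (w,h)" by (cases a)
    obtain w' h' where b: "b = (w',h')" by (cases b)
    have "\<forall>i. real (s i) * w i = real (s i) * w' i" "h = h'" using ab(3) by (auto simp: Mp_def a b vec_eq_iff)
    then have "w = w'" "h = h'" using s by (metis ext less_irrefl of_nat_0 mult_cancel_left of_nat_eq_0_iff)+
    then show "a = b" by (simp add: a b)
  qed
  have "(\<Sum>p\<in>lattice_points_open_par (Tset s J og). monom 1 (nat \<lfloor>snd p\<rfloor>)) = (\<Sum>p\<in>Good. monom 1 (nat \<lfloor>snd p\<rfloor>))"
    unfolding LP by (subst sum.reindex[OF injM]) (simp add: Mp_def case_prod_beta)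
  also have "Good = (\<lambda>w. (w, Hf og (w ?M))) ` {w\<in>Wset s J. validh og (w ?M)}"
    unfolding Good_def using hcond_iff by auto
  also have "(\<Sum>p\<in>(\<lambda>w. (w, Hf og (w ?M))) ` {w\<in>Wset s J. validh og (w ?M)}. monom 1 (nat \<lfloor>snd p\<rfloor>))
     = (\<Sum>w\<in>{w\<in>Wset s J. validh og (w ?M)}. monom 1 (nat \<lfloor>Hf og (w ?M)\<rfloor>))"
    by (subst sum.reindex) (auto simp: inj_on_def)
  also have "\<dots> = (\<Sum>w\<in>Wset s J. if validh og (w ?M) then monom 1 (nat \<lfloor>Hf og (w ?M)\<rfloor>) else 0)"
    using finW by (simp add: sum.inter_filter)
  also have "\<dots> = (\<Sum>w\<in>Wset s J. EE og (w ?M))"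
    by (intro sum.cong refl) (simp add: EE_valid Wset_nonneg)
  finally show ?thesis .
qed

fun chainL :: "(nat \<times> bool) list \<Rightarrow> real \<Rightarrow> real list \<Rightarrow> bool" where
  "chainL [] w0 ws = (ws = [])"
| "chainL (d#ds) w0 ws = (case ws of [] \<Rightarrow> False | w#ws' \<Rightarrow> stepc (fst d) (snd d) w0 w \<and> chainL ds w ws')"

lemma chainL_Cons_set:
  "{ws. chainL ((s,b)#ds) w0 ws} = (\<Union>w1\<in>Nxt s b w0. (Cons w1) ` {ws. chainL ds w1 ws})"
proof (rule set_eqI)
  fix ws show "ws \<in> {ws. chainL ((s,b)#ds) w0 ws} \<longleftrightarrow> ws \<in> (\<Union>w1\<in>Nxt s b w0. (Cons w1) ` {ws. chainL ds w1 ws})"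
    by (cases ws) (auto simp: Nxt_def)
qed

lemma Phi_sum:
  "okds ds \<Longrightarrow> finite {ws. chainL ds w0 ws} \<and> Phi og ds w0 = (\<Sum>ws\<in>{ws. chainL ds w0 ws}. EE og (last (w0#ws)))"
proof (induction ds arbitrary: w0)
  case Nil
  have "{ws. chainL [] w0 ws} = {[]}" by auto
  then show ?case by simp
next
  case (Cons d ds)
  obtain s b where d: "d = (s,b)" by (cases d)
  have s: "s > 0" and ok: "okds ds" using Cons.prems by (auto simp: okds_def d)
  have finN: "finite (Nxt s b w0)" using Nxt_finite[OF s] .
  have IH: "\<And>w1. finite {ws. chainL ds w1 ws} \<and> Phi og ds w1 = (\<Sum>ws\<in>{ws. chainL ds w1 ws}. EE og (last (w1#ws)))"
    using Cons.IH[OF ok] .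
  have fin: "finite {ws. chainL (d#ds) w0 ws}"
    unfolding d chainL_Cons_set using finN IH by auto
  have "(\<Sum>ws\<in>{ws. chainL (d#ds) w0 ws}. EE og (last (w0#ws)))
      = (\<Sum>w1\<in>Nxt s b w0. \<Sum>ws\<in>(Cons w1) ` {ws. chainL ds w1 ws}. EE og (last (w0#ws)))"
    unfolding d chainL_Cons_set using finN IH by (subst sum.UNION_disjoint) auto
  also have "\<dots> = (\<Sum>w1\<in>Nxt s b w0. \<Sum>ws\<in>{ws. chainL ds w1 ws}. EE og (last (w1#ws)))"
    by (rule sum.cong[OF refl]) (simp add: sum.reindex inj_on_def)
  also have "\<dots> = Phi og (d#ds) w0" using IH by (simp add: d)
  finally show ?case using fin by simp
qed

lemma chainL_nth:
  "chainL ds w0 ws \<longleftrightarrow> length ws = length ds \<and>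
     (\<forall>k<length ds. stepc (fst (ds!k)) (snd (ds!k)) ((w0#ws)!k) (ws!k))"
proof (induction ds arbitrary: w0 ws)
  case Nil then show ?case by auto
next
  case (Cons d ds)
  show ?case
  proof (cases ws)
    case Nil then show ?thesis by simp
  next
    case (Cons w ws')
    have "(\<forall>k<length (d#ds). stepc (fst ((d#ds)!k)) (snd ((d#ds)!k)) ((w0#ws)!k) (ws!k)) \<longleftrightarrow>
          stepc (fst d) (snd d) w0 w \<and> (\<forall>k<length ds. stepc (fst (ds!k)) (snd (ds!k)) ((w#ws')!k) (ws'!k))"
      unfolding Cons by (auto simp: less_Suc_eq_0_disj)
    then show ?thesis using Cons.IH[of w ws'] by (auto simp: Cons)
  qed
qed

definition xsN :: "'n::{finite,wellorder} list" where
  "xsN = sorted_list_of_set UNIV"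

lemma xsN_set: "set (xsN::'n::{finite,wellorder} list) = UNIV"
  by (simp add: xsN_def)
lemma xsN_distinct: "distinct (xsN::'n::{finite,wellorder} list)"
  by (simp add: xsN_def)
lemma xsN_strict: "sorted_wrt (<) (xsN::'n::{finite,wellorder} list)"
  unfolding xsN_def by (metis strict_sorted_list_of_set)
lemma xsN_ne: "(xsN::'n::{finite,wellorder} list) \<noteq> []"
  using xsN_set by (metis empty_not_UNIV set_empty)

lemma xsN_less_iff:
  assumes "k < length (xsN::'n::{finite,wellorder} list)" "m < length (xsN::'n list)"
  shows "(xsN::'n list) ! m < xsN ! k \<longleftrightarrow> m < k"
proof
  assume a: "xsN ! m < (xsN::'n list) ! k"
  show "m < k"
  proof (rule ccontr)
    assume "\<not> m < k"
    then have "k \<le> m" by simp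
    then have "xsN ! k \<le> (xsN::'n list) ! m"
      using xsN_strict assms by (metis le_less sorted_wrt_nth_less)
    then show False using a by simp
  qed
next
  assume "m < k" then show "(xsN::'n list) ! m < xsN ! k" using xsN_strict assms sorted_wrt_nth_less by blast
qed

lemma xsN_ex: "\<exists>k < length (xsN::'n::{finite,wellorder} list). (xsN::'n list) ! k = j"
  using xsN_set by (metis in_set_conv_nth UNIV_I)

lemma prevval_xsN:
  assumes k: "k < length (xsN::'n::{finite,wellorder} list)"
  shows "prevval w ((xsN::'n list) ! k) = (0 # map w xsN) ! k"
proof (cases k)
  case 0
  have "\<not> (\<exists>j. j < (xsN::'n list) ! 0)"
  proof
    assume "\<exists>j. j < (xsN::'n list) ! 0"
    then obtain j where j: "j < (xsN::'n list) ! 0" by blast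
    obtain m where m: "m < length (xsN::'n list)" "xsN ! m = j" using xsN_ex by blast
    then have a: "(xsN::'n list) ! m < xsN ! 0" using j by simp
    have "\<not> (xsN::'n list) ! m < xsN ! 0" using xsN_less_iff[of 0 m] m(1) k 0 by simp
    then show False using a by simp
  qed
  then show ?thesis using 0 by (simp add: prevval_def)
next
  case (Suc m)
  have m: "m < length (xsN::'n list)" using k Suc by simp
  have lt: "(xsN::'n list) ! m < xsN ! k" using xsN_less_iff[OF k m] Suc by simp
  have "predN ((xsN::'n list) ! k) = xsN ! m"
    unfolding predN_def
  proof (rule Max_eqI)
    show "finite {j. j < (xsN::'n list) ! k}" by simp
    show "(xsN::'n list) ! m \<in> {j. j < xsN ! k}" using lt by simp
    fix y assume "y \<in> {j. j < (xsN::'n list) ! k}"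
    then have y: "y < (xsN::'n list) ! k" by simp
    obtain p where p: "p < length (xsN::'n list)" "xsN ! p = y" using xsN_ex by blast
    then have "p < k" using xsN_less_iff[OF k p(1)] y by simp
    then have "p \<le> m" using Suc by simp
    then consider "p = m" | "p < m" by linarith
    then show "y \<le> (xsN::'n list) ! m"
    proof cases
      case 1 then show ?thesis using p by simp
    next
      case 2
      then have "(xsN::'n list) ! p < xsN ! m" using xsN_less_iff[OF m p(1)] by simp
      then show ?thesis using p(2) by simp
    qed
  qed
  moreover have "\<exists>j. j < (xsN::'n list) ! k" using lt by blast
  ultimately show ?thesis using Suc m by (simp add: prevval_def)
qed

lemma last_xsN: "last (xsN::'n::{finite,wellorder} list) = Max UNIV"
proof -
  let ?L = "length (xsN::'n list)"
  have L: "?L > 0" using xsN_ne by simp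
  have "last (xsN::'n list) = xsN ! (?L - 1)" by (rule last_conv_nth[OF xsN_ne])
  also have "\<dots> = Max UNIV"
  proof (rule Max_eqI[symmetric])
    fix y :: 'n
    obtain p where p: "p < ?L" "xsN ! p = y" using xsN_ex by blast
    show "y \<le> (xsN::'n list) ! (?L - 1)"
    proof (cases "p = ?L - 1")
      case True then show ?thesis using p by simp
    next
      case False then have "p < ?L - 1" using p by simp
      have li: "\<And>k m. k < ?L \<Longrightarrow> m < ?L \<Longrightarrow> (xsN::'n list) ! m < xsN ! k \<longleftrightarrow> m < k"
        by (rule xsN_less_iff)
      have "(xsN::'n list) ! p < xsN ! (?L - 1)" using li[of "?L - 1" p] p(1) L \<open>p < ?L - 1\<close> by simp
      then show ?thesis using p(2) by simp
    qed
  qed auto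
  finally show ?thesis .
qed

definition dsN :: "('n::{finite,wellorder} \<Rightarrow> nat) \<Rightarrow> 'n set \<Rightarrow> (nat \<times> bool) list" where
  "dsN s J = map (\<lambda>i. (s i, i \<in> J)) xsN"

lemma W_chainL: "w \<in> Wset s J \<longleftrightarrow> chainL (dsN s J) 0 (map w xsN)"
proof -
  have "chainL (dsN s J) 0 (map w xsN) \<longleftrightarrow>
      (\<forall>k<length (xsN::'a list). stepc (s (xsN!k)) (xsN!k \<in> J) (prevval w (xsN ! k)) (w (xsN!k)))"
    unfolding chainL_nth by (auto simp: dsN_def prevval_xsN)
  also have "\<dots> \<longleftrightarrow> (\<forall>i. stepc (s i) (i \<in> J) (prevval w i) (w i))"
  proof
    assume a: "\<forall>k<length (xsN::'a list). stepc (s (xsN!k)) (xsN!k \<in> J) (prevval w (xsN ! k)) (w (xsN!k))"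
    show "\<forall>i. stepc (s i) (i \<in> J) (prevval w i) (w i)"
    proof
      fix i :: 'a
      obtain k where "k < length (xsN::'a list)" "(xsN::'a list) ! k = i" using xsN_ex by blast
      then show "stepc (s i) (i \<in> J) (prevval w i) (w i)" using a by blast
    qed
  qed simp
  also have "\<dots> \<longleftrightarrow> w \<in> Wset s J"
    unfolding Wset_def chainN_def stepc_def Pint_def by (auto split: if_splits)
  finally show ?thesis by simp
qed

lemma W_sum:
  assumes s: "\<And>i. s i > 0"
  shows "finite (Wset s J) \<and> (\<Sum>w\<in>Wset s J. EE og (w (Max UNIV))) = Phi og (dsN s J) 0"
proof -
  let ?L = "{ws. chainL (dsN s J) 0 ws}"
  have ok: "okds (dsN s J)" using s by (auto simp: okds_def dsN_def)
  have PS: "finite ?L" "Phi og (dsN s J) 0 = (\<Sum>ws\<in>?L. EE og (last (0#ws)))"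
    using Phi_sum[OF ok] by auto
  have inj: "inj_on (\<lambda>w. map w xsN) (Wset s J)"
  proof (rule inj_onI)
    fix w w' :: "'a \<Rightarrow> real" assume "map w xsN = map w' xsN"
    then have "\<forall>x\<in>set xsN. w x = w' x" by (simp add: map_eq_conv)
    then show "w = w'" using xsN_set by auto
  qed
  have img: "?L = (\<lambda>w. map w xsN) ` Wset s J"
  proof (rule set_eqI, rule iffI)
    fix ws assume "ws \<in> ?L"
    then have c: "chainL (dsN s J) 0 ws" by simp
    then have len: "length ws = length (xsN::'a list)" unfolding chainL_nth by (simp add: dsN_def)
    define idx where "idx (i::'a) = (THE k. k < length (xsN::'a list) \<and> xsN ! k = i)" for i
    have idx: "idx ((xsN::'a list) ! k) = k" if "k < length (xsN::'a list)" for k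
      unfolding idx_def
    proof (rule the_equality)
      show "k < length (xsN::'a list) \<and> xsN ! k = (xsN::'a list) ! k" using that by simp
      fix x assume "x < length (xsN::'a list) \<and> xsN ! x = (xsN::'a list) ! k"
      then show "x = k" using nth_eq_iff_index_eq[OF xsN_distinct] that by blast
    qed
    define w where "w i = ws ! idx i" for i
    have mw: "map w xsN = ws" using len idx by (intro nth_equalityI) (auto simp: w_def)
    then have "w \<in> Wset s J" using W_chainL[of w s J] c by simp
    then show "ws \<in> (\<lambda>w. map w xsN) ` Wset s J" using mw by blast
  next
    fix ws assume "ws \<in> (\<lambda>w. map w xsN) ` Wset s J"
    then show "ws \<in> ?L" using W_chainL by auto
  qed
  have finW: "finite (Wset s J)" using PS(1) img inj finite_imageD by metis
  have "Phi og (dsN s J) 0 = (\<Sum>w\<in>Wset s J. EE og (last (0 # map w xsN)))"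
    unfolding PS(2) img by (subst sum.reindex[OF inj]) simp
  also have "\<dots> = (\<Sum>w\<in>Wset s J. EE og (w (Max UNIV)))"
    using xsN_ne[where 'n='a] last_xsN[where 'n='a] by (intro sum.cong refl) (simp add: last_map)
  finally show ?thesis using finW by simp
qed

theorem corollary5p6:
  fixes s :: "'n::{finite,wellorder} \<Rightarrow> nat" and F :: "(real^'n::{finite,wellorder}) set"
  assumes "\<forall>i. 0 < s i"
    and "F face_of lecture_hall_simplex s"
    and "F \<noteq> {}"
  shows "real_rooted (local_hstar F) \<and> unimodal_poly (local_hstar F)"
proof -
  have s: "\<And>i. s i > 0" using assms(1) by blast
  let ?V = "insert 0 (range (vtx s))"
  have ind: "\<not> affine_dependent ?V" using vtx_indep[of s] s by blast
  have "F face_of convex hull ?V" using assms(2) LHS_hull[of s] s by simp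
  then obtain c where cV: "c \<subseteq> ?V" and Fc: "F = convex hull c"
    using face_of_convex_hull_affine_independent[OF ind] by blast
  have indc: "\<not> affine_dependent c" using affine_dependent_subset[OF _ cV] ind by blast
  have vert: "vertices_of F = c"
    unfolding vertices_of_def Fc using extreme_point_of_convex_hull_affine_independent[OF indc] by blast
  define J where "J = {j. vtx s j \<in> c}"
  define og where "og = (0 \<in> c)"
  have cT: "c = Tset s J og"
  proof (rule set_eqI)
    fix x show "x \<in> c \<longleftrightarrow> x \<in> Tset s J og"
      using cV by (auto simp: Tset_def J_def og_def)
  qed
  have WS: "finite (Wset s J)" "(\<Sum>w\<in>Wset s J. EE og (w (Max UNIV))) = Phi og (dsN s J) 0"
    using W_sum[of s J og] s by auto
  have LH: "local_hstar F = Phi og (dsN s J) 0"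
    unfolding local_hstar_def vert cT LP_hstar[of s, OF s WS(1)] WS(2) ..
  have ok: "okds (dsN s J)" using s by (auto simp: okds_def dsN_def)
  have rr: "real_rooted (local_hstar F)" unfolding LH by (rule Phi_rr[OF ok])
  have nn: "NN (local_hstar F)"
    unfolding NN_def local_hstar_def by (auto simp: coeff_sum coeff_monom intro!: sum_nonneg)
  show ?thesis using rr rr_unimodal[OF rr nn] by simp
qed

end
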